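(* Assume the standing setting and hypotheses (H1), (H2), (H3) below, let $p\in[1,+\infty]$, and equip $X$ and $Y$ with $\|\cdot\|_p$. The following are equivalent: (i) the system given by (P) with state space $X$ is ISS w.r.t. inputs in $\mathcal{U}$, i.e. there are $\beta\in\mathcal{KL}$, $\gamma\in\mathcal{K}$ with $\|\phi(t,x,u)\|_p\le\beta(\|x\|_p,t)+\gamma(\|u\|_{\mathcal{U}})$ for all $t\ge0$, $x\in X$, $u\in\mathcal{U}(x)$; (ii) the same estimate holds for all $t\ge0$, $x\in X$ and all $u\in\mathcal{U}(x)\cap\mathcal{U}_c$ (inputs constant in time and space); (iii) the system (Q) with state space $Y$ is ISS w.r.t. inputs in $\mathcal{V}$, i.e. there are $\beta\in\mathcal{KL}$, $\gamma\in\mathcal{K}$ with $\|\phi_Y(t,y,v)\|_p\le\beta(\|y\|_p,t)+\gamma(\|v\|_{\mathcal{V}})$ for all $t\ge0$, $y\in Y$, $v\in\mathcal{V}$.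
   Context: Standing setting: $G\subset\mathbb{R}^n$ open and bounded, $\mu(G)$ its Lebesgue measure; $CL=C^0(\mathbb{R}_+\times\overline G)\cap C^{1,2}((0,\infty)\times G)$; $x[t]:=x(t,\cdot)$. $L$: $(Lx)(t,z)=\partial_tx-\sum_{i,j=1}^na_{ij}(z)\partial_{z_i}\partial_{z_j}x-f(z,x,\nabla x)$, $a_{ij}\in C^0(\overline G)$, $f\in C^0(\overline G\times\mathbb{R}\times\mathbb{R}^n)$, uniformly parabolic ($\sum a_{ij}(z)\xi_i\xi_j\ge K|\xi|^2$, $K>0$). Problem (P): $Lx=0$ on $(0,\infty)\times G$, $x(0,\cdot)=x_0$ on $G$, $x=u$ on $\mathbb{R}_+\times\partial G$. $\mathcal{U}=\{u\in C^0(\mathbb{R}_+;C^0(\partial G)):u\text{ bounded}\}$, $\|u\|_{\mathcal{U}}=\sup_{t\ge0,z\in\partial G}|u(t,z)|$, ordered pointwise; $\mathcal{U}_c=\{u\in\mathcal{U}:\exists k\in\mathbb{R},\ u\equiv k\}$. $\phi(t,x_0,u)=x[t]$ denotes the unique classical solution of (P). (H1) There is a linear space $X\subseteq C^0(\overline G)$ containing all constant functions, and for each $x_0\in X$ a nonempty set $\mathcal{U}(x_0)\subseteq\{v\in\mathcal{U}:v(0,z)=x_0(z)\ \forall z\in\partial G\}$ containing every $v\in\mathcal{U}$ with $v(t,z)=x_0(z)$ for all $z\in\partial G$, $t\ge0$, such that for every $x_0\in X$, $u\in\mathcal{U}(x_0)$ problem (P) has a solution $x\in CL$ with $x[t]\in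 X$ for all $t\ge0$. (H2) For every bounded $W\subset\mathbb{R}$ there is $k>0$ with $f(z,w_1,\xi)-f(z,w_2,\xi)<k(w_1-w_2)$ for all $w_1>w_2$ in $W$, $z\in G$, $\xi\in\mathbb{R}^n$; and $f$ is continuously differentiable w.r.t. $(w,\xi)$. (H3) For every $\delta>0$, $a\in\mathbb{R}$, $x\in X$ there is a continuous $k:\overline G\to[0,1]$ with $k=1$ on $\partial G$, $k(z)=0$ whenever $z\in G$ and $\inf_{s\in\partial G}|z-s|\ge\delta$, and $(1-k)x+ak\in X$. System (Q): $\partial_ty-\sum a_{ij}(z)\partial_{z_i}\partial_{z_j}y-f(z,y+v,\nabla y)=0$ on $(0,\infty)\times G$, $y=0$ on $\mathbb{R}_+\times\partial G$, with state space $Y=\{y\in X:y=0\text{ on }\partial G\}$ and inputs $\mathcal{V}=\{v\in C^0(\mathbb{R}_+\times\overline G):v\equiv k\text{ for some }k\in\mathbb{R}\}$, $\|v\|_{\mathcal{V}}=|k|$ (sup norm). Its solution is $\phi_Y(t,y,v)=\phi(t,y+v,v|_{\partial G})-v$ (well defined since $v|_{\partial G}\in\mathcal{U}(y+v)$ by (H1)). $\mathcal{K},\mathcal{KL}$ are the standard comparison function classes. *)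

theory Defs
  imports "HOL-Analysis.Analysis"
begin

type_synonym 'n space = "real ^ 'n"

text \<open>Canonical representative of an element of C0(closure G): values outside closure G set to 0.\<close>
definition restr :: "('n::finite) space set \<Rightarrow> ('n space \<Rightarrow> real) \<Rightarrow> ('n space \<Rightarrow> real)" where
  "restr G g = (\<lambda>z. if z \<in> closure G then g z else 0)"

definition C0cl :: "('n::finite) space set \<Rightarrow> ('n space \<Rightarrow> real) set" where
  "C0cl G = {g. continuous_on (closure G) g \<and> (\<forall>z. z \<notin> closure G \<longrightarrow> g z = 0)}"

definition pdt :: "(real \<Rightarrow> ('n::finite) space \<Rightarrow> real) \<Rightarrow> real \<Rightarrow> 'n space \<Rightarrow> real" where
  "pdt x t z = deriv (\<lambda>s. x s z) t"

definition pdz :: "'n::finite \<Rightarrow> ('n space \<Rightarrow> real) \<Rightarrow> 'n space \<Rightarrow> real" where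
  "pdz i g z = deriv (\<lambda>h. g (z + h *\<^sub>R axis i 1)) 0"

definition grad :: "('n::finite space \<Rightarrow> real) \<Rightarrow> 'n space \<Rightarrow> 'n space" where
  "grad g z = (\<chi> i. pdz i g z)"

definition CL :: "('n::finite) space set \<Rightarrow> (real \<Rightarrow> 'n space \<Rightarrow> real) set" where
  "CL G = {x.
     continuous_on ({0..} \<times> closure G) (\<lambda>(t,z). x t z) \<and>
     (\<forall>t>0. \<forall>z\<in>G.
        (\<lambda>s. x s z) differentiable (at t) \<and>
        (\<forall>i. (\<lambda>h. x t (z + h *\<^sub>R axis i 1)) differentiable (at 0) \<and>
             (\<forall>j. (\<lambda>h. pdz j (x t) (z + h *\<^sub>R axis i 1)) differentiable (at 0)))) \<and>
     continuous_on ({0<..} \<times> G) (\<lambda>(t,z). pdt x t z) \<and>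
     (\<forall>i. continuous_on ({0<..} \<times> G) (\<lambda>(t,z). pdz i (x t) z)) \<and>
     (\<forall>i j. continuous_on ({0<..} \<times> G) (\<lambda>(t,z). pdz i (pdz j (x t)) z))}"

text \<open>The operator L.  a i j z = a_ij(z), f z w \<xi> = f(z,w,\<xi>).\<close>
definition Lop :: "('n::finite \<Rightarrow> 'n \<Rightarrow> 'n space \<Rightarrow> real) \<Rightarrow> ('n space \<Rightarrow> real \<Rightarrow> 'n space \<Rightarrow> real)
    \<Rightarrow> (real \<Rightarrow> 'n space \<Rightarrow> real) \<Rightarrow> real \<Rightarrow> 'n space \<Rightarrow> real" where
  "Lop a f x t z = pdt x t z - (\<Sum>i\<in>UNIV. \<Sum>j\<in>UNIV. a i j z * pdz i (pdz j (x t)) z)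
                   - f z (x t z) (grad (x t) z)"

definition is_sol where
  "is_sol G a f x0 u x \<longleftrightarrow> x \<in> CL G \<and>
     (\<forall>t>0. \<forall>z\<in>G. Lop a f x t z = 0) \<and>
     (\<forall>z\<in>G. x 0 z = x0 z) \<and>
     (\<forall>t\<ge>0. \<forall>z\<in>frontier G. x t z = u t z)"

definition phi where
  "phi G a f t x0 u = (THE w. \<exists>x. is_sol G a f x0 u x \<and> w = restr G (x t))"

text \<open>Standing convention: phi denotes THE unique classical solution of (P).\<close>
definition sol_unique where
  "sol_unique G a f X Uad \<longleftrightarrow> (\<forall>x0\<in>X. \<forall>u\<in>Uad x0. \<forall>x x'.
     is_sol G a f x0 u x \<and> is_sol G a f x0 u x' \<longrightarrow>
     (\<forall>t\<ge>0. \<forall>z\<in>closure G. x t z = x' t z))"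

definition Uset :: "('n::finite) space set \<Rightarrow> (real \<Rightarrow> 'n space \<Rightarrow> real) set" where
  "Uset G = {u.
     (\<forall>t\<ge>0. continuous_on (frontier G) (u t)) \<and>
     (\<forall>t\<ge>0. \<forall>e>0. \<exists>d>0. \<forall>s\<ge>0. \<bar>s - t\<bar> < d \<longrightarrow> (\<forall>z\<in>frontier G. \<bar>u s z - u t z\<bar> \<le> e)) \<and>
     (\<exists>M. \<forall>t\<ge>0. \<forall>z\<in>frontier G. \<bar>u t z\<bar> \<le> M)}"

definition unorm :: "('n::finite) space set \<Rightarrow> (real \<Rightarrow> 'n space \<Rightarrow> real) \<Rightarrow> real" where
  "unorm G u = Sup (insert 0 {\<bar>u t z\<bar> | t z. t \<ge> 0 \<and> z \<in> frontier G})"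

definition Uc :: "('n::finite) space set \<Rightarrow> (real \<Rightarrow> 'n space \<Rightarrow> real) set" where
  "Uc G = {u \<in> Uset G. \<exists>k. \<forall>t\<ge>0. \<forall>z\<in>frontier G. u t z = k}"

definition lpnorm :: "('n::finite) space set \<Rightarrow> ereal \<Rightarrow> ('n space \<Rightarrow> real) \<Rightarrow> real" where
  "lpnorm G p g = (if p = \<infinity> then Sup (insert 0 ((\<lambda>z. \<bar>g z\<bar>) ` G))
                   else (integral G (\<lambda>z. \<bar>g z\<bar> powr real_of_ereal p)) powr (1 / real_of_ereal p))"

definition class_K :: "(real \<Rightarrow> real) \<Rightarrow> bool" where
  "class_K \<gamma> \<longleftrightarrow> continuous_on {0..} \<gamma> \<and> \<gamma> 0 = 0 \<and> strict_mono_on {0..} \<gamma>"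

definition class_KL :: "(real \<Rightarrow> real \<Rightarrow> real) \<Rightarrow> bool" where
  "class_KL \<beta> \<longleftrightarrow> continuous_on ({0..} \<times> {0..}) (\<lambda>(r,t). \<beta> r t) \<and>
     (\<forall>t\<ge>0. class_K (\<lambda>r. \<beta> r t)) \<and>
     (\<forall>r\<ge>0. antimono_on {0..} (\<beta> r) \<and> ((\<beta> r) \<longlongrightarrow> 0) at_top)"

definition standing where
  "standing G a f \<longleftrightarrow> open G \<and> bounded G \<and>
     (\<forall>i j. continuous_on (closure G) (a i j)) \<and>
     continuous_on (closure G \<times> UNIV \<times> UNIV) (\<lambda>(z,w,\<xi>). f z w \<xi>) \<and>
     (\<exists>K>0. \<forall>z\<in>closure G. \<forall>\<xi>::real^_. (\<Sum>i\<in>UNIV. \<Sum>j\<in>UNIV. a i j z * \<xi>$i * \<xi>$j) \<ge> K * (norm \<xi>)\<^sup>2)"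

definition H1 where
  "H1 G a f X Uad \<longleftrightarrow>
     X \<subseteq> C0cl G \<and>
     (\<forall>x\<in>X. \<forall>y\<in>X. (\<lambda>z. x z + y z) \<in> X) \<and>
     (\<forall>c. \<forall>x\<in>X. (\<lambda>z. c * x z) \<in> X) \<and>
     (\<forall>c. restr G (\<lambda>_. c) \<in> X) \<and>
     (\<forall>x0\<in>X. Uad x0 \<noteq> {} \<and>
        Uad x0 \<subseteq> {v \<in> Uset G. \<forall>z\<in>frontier G. v 0 z = x0 z} \<and>
        (\<forall>v\<in>Uset G. (\<forall>t\<ge>0. \<forall>z\<in>frontier G. v t z = x0 z) \<longrightarrow> v \<in> Uad x0) \<and>
        (\<forall>u\<in>Uad x0. \<exists>x. is_sol G a f x0 u x \<and> (\<forall>t\<ge>0. x t \<in> X)))"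

definition H2 :: "('n::finite) space set \<Rightarrow> ('n space \<Rightarrow> real \<Rightarrow> 'n space \<Rightarrow> real) \<Rightarrow> bool" where
  "H2 G f \<longleftrightarrow>
     (\<forall>W::real set. bounded W \<longrightarrow> (\<exists>k>0. \<forall>w1\<in>W. \<forall>w2\<in>W. w1 > w2 \<longrightarrow>
        (\<forall>z\<in>G. \<forall>\<xi>. f z w1 \<xi> - f z w2 \<xi> < k * (w1 - w2)))) \<and>
     (\<exists>fw f\<xi>. (\<forall>z\<in>closure G. \<forall>w \<xi>.
          ((\<lambda>p. f z (fst p) (snd p)) has_derivative
             (\<lambda>(dw, d\<xi>). fw z w \<xi> * dw + f\<xi> z w \<xi> \<bullet> d\<xi>)) (at (w, \<xi>))) \<and>
        continuous_on (closure G \<times> UNIV \<times> UNIV) (\<lambda>(z,w,\<xi>). fw z w \<xi>) \<and>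
        continuous_on (closure G \<times> UNIV \<times> UNIV) (\<lambda>(z,w,\<xi>). f\<xi> z w \<xi>))"

definition H3 :: "('n::finite) space set \<Rightarrow> ('n space \<Rightarrow> real) set \<Rightarrow> bool" where
  "H3 G X \<longleftrightarrow> (\<forall>\<delta>>0. \<forall>c::real. \<forall>x\<in>X. \<exists>k.
     continuous_on (closure G) k \<and> (\<forall>z\<in>closure G. 0 \<le> k z \<and> k z \<le> 1) \<and>
     (\<forall>z\<in>frontier G. k z = 1) \<and>
     (\<forall>z\<in>G. infdist z (frontier G) \<ge> \<delta> \<longrightarrow> k z = 0) \<and>
     restr G (\<lambda>z. (1 - k z) * x z + c * k z) \<in> X)"

text \<open>System (Q): state space Y, constant inputs v \<equiv> k (identified with k, norm |k|).\<close>
definition Yset :: "('n::finite) space set \<Rightarrow> ('n space \<Rightarrow> real) set \<Rightarrow> ('n space \<Rightarrow> real) set" where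
  "Yset G X = {y \<in> X. \<forall>z\<in>frontier G. y z = 0}"

definition phiY where
  "phiY G a f t y k = restr G (\<lambda>z. phi G a f t (restr G (\<lambda>z'. y z' + k)) (\<lambda>s z'. k) z - k)"

definition ISS_P where
  "ISS_P G a f X Uad p \<longleftrightarrow> (\<exists>\<beta> \<gamma>. class_KL \<beta> \<and> class_K \<gamma> \<and>
     (\<forall>t\<ge>0. \<forall>x\<in>X. \<forall>u\<in>Uad x.
        lpnorm G p (phi G a f t x u) \<le> \<beta> (lpnorm G p x) t + \<gamma> (unorm G u)))"

definition ISS_P_const where
  "ISS_P_const G a f X Uad p \<longleftrightarrow> (\<exists>\<beta> \<gamma>. class_KL \<beta> \<and> class_K \<gamma> \<and>
     (\<forall>t\<ge>0. \<forall>x\<in>X. \<forall>u\<in>Uad x \<inter> Uc G.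
        lpnorm G p (phi G a f t x u) \<le> \<beta> (lpnorm G p x) t + \<gamma> (unorm G u)))"

definition ISS_Q where
  "ISS_Q G a f X p \<longleftrightarrow> (\<exists>\<beta> \<gamma>. class_KL \<beta> \<and> class_K \<gamma> \<and>
     (\<forall>t\<ge>0. \<forall>y\<in>Yset G X. \<forall>k::real.
        lpnorm G p (phiY G a f t y k) \<le> \<beta> (lpnorm G p y) t + \<gamma> \<bar>k\<bar>))"

end

theory Submission
  imports Defs
begin


lemma MVT_gen:
  fixes f f' :: "real \<Rightarrow> real"
  assumes "\<And>x. min a b \<le> x \<Longrightarrow> x \<le> max a b \<Longrightarrow> (f has_real_derivative f' x) (at x)"
  shows "\<exists>c. min a b \<le> c \<and> c \<le> max a b \<and> f b - f a = (b - a) * f' c"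
proof (cases a b rule: linorder_cases)
  case less
  then obtain c where "a < c" "c < b" "f b - f a = (b - a) * f' c"
    using MVT2[OF less, of f f'] assms by force
  then show ?thesis using less by (intro exI[of _ c]) auto
next
  case equal then show ?thesis by (intro exI[of _ a]) auto
next
  case greater
  then obtain c where "b < c" "c < a" "f a - f b = (a - b) * f' c"
    using MVT2[OF greater, of f f'] assms by force
  then show ?thesis using greater by (intro exI[of _ c]) (auto simp: algebra_simps)
qed

lemma norm_le_compwise:
  fixes x y :: "real^'n"
  assumes "\<And>i. \<bar>x$i\<bar> \<le> \<bar>y$i\<bar>"
  shows "norm x \<le> norm y"
  unfolding norm_vec_def using assms by (intro L2_set_mono) auto

lemma bl_sum_comp: "bounded_linear (\<lambda>v::real^'n. \<Sum>i\<in>UNIV. v$i * (c i::real))"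
  by (intro bounded_linear_sum bounded_linear_mult_const bounded_linear_vec_nth)

lemma C1:
  fixes q :: "real^'n \<Rightarrow> real" and p :: "'n \<Rightarrow> real^'n \<Rightarrow> real"
  assumes G: "open G" "z \<in> G"
    and d: "\<And>w i. w \<in> G \<Longrightarrow> ((\<lambda>h. q (w + h *\<^sub>R axis i 1)) has_real_derivative p i w) (at 0)"
    and c: "\<And>i. continuous_on G (p i)"
  shows "(q has_derivative (\<lambda>v. \<Sum>i\<in>UNIV. v$i * p i z)) (at z)"
  unfolding has_derivative_at_alt
proof (intro conjI allI impI bl_sum_comp)
  fix e :: real assume "e > 0"
  obtain r where r: "r > 0" "ball z r \<subseteq> G" using G open_contains_ball by blast
  define N where "N = real CARD('n)"
  have N: "N > 0" unfolding N_def by simp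
  define \<epsilon> where "\<epsilon> = e / N"
  have eps: "\<epsilon> > 0" using \<open>e>0\<close> N by (simp add: \<epsilon>_def)
  have "\<forall>i. \<exists>\<delta>>0. \<forall>w\<in>G. dist w z < \<delta> \<longrightarrow> dist (p i w) (p i z) < \<epsilon>"
    using c G eps unfolding continuous_on_iff by blast
  then obtain \<delta> where \<delta>: "\<And>i. \<delta> i > 0" "\<And>i w. w\<in>G \<Longrightarrow> dist w z < \<delta> i \<Longrightarrow> dist (p i w) (p i z) < \<epsilon>"
    by metis
  define dd where "dd = min r (Min (range \<delta>))"
  have dd: "dd > 0" unfolding dd_def using r \<delta> by simp
  have ddl: "dd \<le> \<delta> i" for i unfolding dd_def by (simp add: min.coboundedI2)
  show "\<exists>d>0. \<forall>y. norm (y - z) < d \<longrightarrow> norm (q y - q z - (\<Sum>i\<in>UNIV. (y - z)$i * p i z)) \<le> e * norm (y - z)"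
  proof (intro exI[of _ dd] conjI allI impI dd)
    fix y assume ny: "norm (y - z) < dd"
    define u where "u = y - z"
    define ys where "ys S = (\<chi> i. if i \<in> S then u$i else 0)" for S
    have inG: "z + v \<in> G \<and> dist (z + v) z < dd" if "\<And>i. \<bar>v$i\<bar> \<le> \<bar>u$i\<bar>" for v
    proof -
      have "norm v \<le> norm u" using that by (rule norm_le_compwise)
      then have "dist (z + v) z < dd" using ny by (simp add: dist_norm u_def)
      then show ?thesis using r dd_def by (auto simp: dist_commute intro!: subsetD[OF r(2)])
    qed
    have main: "\<bar>q (z + ys S) - q z - (\<Sum>i\<in>S. u$i * p i z)\<bar> \<le> \<epsilon> * (\<Sum>i\<in>S. \<bar>u$i\<bar>)" for S
    proof (induction S rule: infinite_finite_induct)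
      case (infinite S) then show ?case by simp
    next
      case empty
      have "ys {} = 0" by (simp add: ys_def vec_eq_iff)
      then show ?case by simp
    next
      case (insert j S)
      define w0 where "w0 = z + ys S"
      have ysi: "ys (insert j S) = ys S + u$j *\<^sub>R axis j 1"
        using insert by (auto simp: ys_def vec_eq_iff axis_def)
      define \<phi> where "\<phi> s = q (w0 + s *\<^sub>R axis j 1)" for s
      have pts: "w0 + s *\<^sub>R axis j 1 \<in> G \<and> dist (w0 + s *\<^sub>R axis j 1) z < dd"
        if "\<bar>s\<bar> \<le> \<bar>u$j\<bar>" for s
      proof -
        have "w0 + s *\<^sub>R axis j 1 = z + (ys S + s *\<^sub>R axis j 1)" by (simp add: w0_def)
        moreover have "\<bar>(ys S + s *\<^sub>R axis j 1)$i\<bar> \<le> \<bar>u$i\<bar>" for i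
          using that insert by (auto simp: ys_def axis_def)
        ultimately show ?thesis using inG by metis
      qed
      have der: "(\<phi> has_real_derivative p j (w0 + s *\<^sub>R axis j 1)) (at s)"
        if "\<bar>s\<bar> \<le> \<bar>u$j\<bar>" for s
      proof -
        have "((\<lambda>h. q ((w0 + s *\<^sub>R axis j 1) + h *\<^sub>R axis j 1)) has_real_derivative p j (w0 + s *\<^sub>R axis j 1)) (at 0)"
          using d pts[OF that] by blast
        moreover have "(\<lambda>h. q ((w0 + s *\<^sub>R axis j 1) + h *\<^sub>R axis j 1)) = (\<lambda>h. \<phi> (h + s))"
          by (rule ext) (simp add: \<phi>_def algebra_simps scaleR_add_left)
        ultimately show ?thesis using DERIV_shift[of \<phi> _ 0 s] by simp
      qed
      obtain cc where cc: "min 0 (u$j) \<le> cc" "cc \<le> max 0 (u$j)"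
        "\<phi> (u$j) - \<phi> 0 = (u$j - 0) * p j (w0 + cc *\<^sub>R axis j 1)"
        using MVT_gen[of 0 "u$j" \<phi> "\<lambda>s. p j (w0 + s *\<^sub>R axis j 1)"] der by force
      have ccb: "\<bar>cc\<bar> \<le> \<bar>u$j\<bar>" using cc by auto
      have "dist (p j (w0 + cc *\<^sub>R axis j 1)) (p j z) < \<epsilon>"
        using \<delta>(2)[of "w0 + cc *\<^sub>R axis j 1" j] pts[OF ccb] ddl[of j] by auto
      then have e1: "\<bar>\<phi> (u$j) - \<phi> 0 - u$j * p j z\<bar> \<le> \<epsilon> * \<bar>u$j\<bar>"
        using cc(3) by (simp add: dist_real_def right_diff_distrib[symmetric] abs_mult)
          (metis abs_ge_zero less_imp_le mult.commute mult_right_mono)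
      have "\<phi> (u$j) = q (z + ys (insert j S))" by (simp add: \<phi>_def ysi w0_def add.assoc)
      moreover have "\<phi> 0 = q (z + ys S)" by (simp add: \<phi>_def w0_def)
      ultimately show ?case using insert e1
        by (simp add: distrib_left)
    qed
    have "ys UNIV = u" by (simp add: ys_def vec_eq_iff)
    then have m: "\<bar>q y - q z - (\<Sum>i\<in>UNIV. u$i * p i z)\<bar> \<le> \<epsilon> * (\<Sum>i\<in>UNIV. \<bar>u$i\<bar>)"
      using main[of UNIV] by (simp add: u_def)
    have "(\<Sum>i\<in>UNIV. \<bar>u$i\<bar>) \<le> (\<Sum>i\<in>(UNIV::'n set). norm u)"
      by (intro sum_mono) (metis component_le_norm_cart real_norm_def)
    also have "\<dots> = N * norm u" by (simp add: N_def)
    finally have "\<epsilon> * (\<Sum>i\<in>UNIV. \<bar>u$i\<bar>) \<le> \<epsilon> * (N * norm u)" using eps by simp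
    also have "\<dots> = e * norm u" using N by (simp add: \<epsilon>_def)
    finally show "norm (q y - q z - (\<Sum>i\<in>UNIV. (y - z)$i * p i z)) \<le> e * norm (y - z)"
      using m by (simp add: u_def)
  qed
qed



lemma second_max:
  fixes \<psi> \<psi>' :: "real \<Rightarrow> real"
  assumes r: "r > 0"
    and d1: "\<And>h. \<bar>h\<bar> < r \<Longrightarrow> (\<psi> has_real_derivative \<psi>' h) (at h)"
    and d2: "(\<psi>' has_real_derivative D) (at 0)"
    and mx: "\<And>h. \<bar>h\<bar> < r \<Longrightarrow> \<psi> h \<le> \<psi> 0"
  shows "D \<le> 0"
proof (rule ccontr)
  assume "\<not> D \<le> 0"
  then have D: "D > 0" by simp
  have z: "\<psi>' 0 = 0"
    using DERIV_local_max[OF d1[of 0] r] mx r by auto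
  obtain d where d: "d > 0" "\<And>h. h > 0 \<Longrightarrow> h < d \<Longrightarrow> \<psi>' 0 < \<psi>' (0 + h)"
    using DERIV_pos_inc_right[OF d2 D] by blast
  define h where "h = min d r / 2"
  have h: "h > 0" "h < d" "h < r" using d r by (auto simp: h_def)
  obtain c where c: "0 < c" "c < h" "\<psi> h - \<psi> 0 = (h - 0) * \<psi>' c"
    using MVT2[of 0 h \<psi> \<psi>'] h d1 by force
  have "\<psi>' c > 0" using d(2)[of c] c h z by simp
  then have "\<psi> h > \<psi> 0" using c h by (metis diff_gt_0_iff_gt mult_pos_pos)
  with mx[of h] h show False by simp
qed

lemma dir_shift:
  fixes F :: "real^'n \<Rightarrow> real" and w b v :: "real^'n"
  assumes "((\<lambda>h. F (w + h *\<^sub>R v)) has_real_derivative D) (at 0)" "w = b + s0 *\<^sub>R v"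
  shows "((\<lambda>s. F (b + s *\<^sub>R v)) has_real_derivative D) (at s0)"
proof -
  have "(\<lambda>h. F (w + h *\<^sub>R v)) = (\<lambda>h. (\<lambda>s. F (b + s *\<^sub>R v)) (h + s0))"
    using assms(2) by (intro ext) (simp add: scaleR_add_left add.assoc add.commute[of "s0 *\<^sub>R v"])
  then show ?thesis using assms(1) DERIV_shift[of "\<lambda>s. F (b + s *\<^sub>R v)" D 0 s0] by simp
qed

lemma quad_max:
  fixes g :: "real^'n \<Rightarrow> real" and P :: "'n \<Rightarrow> real^'n \<Rightarrow> real"
    and Q :: "'n \<Rightarrow> 'n \<Rightarrow> real^'n \<Rightarrow> real"
  assumes G: "open G" "z0 \<in> G"
    and dP: "\<And>w i. w \<in> G \<Longrightarrow> ((\<lambda>h. g (w + h *\<^sub>R axis i 1)) has_real_derivative P i w) (at 0)"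
    and dQ: "\<And>w i j. w \<in> G \<Longrightarrow> ((\<lambda>h. P j (w + h *\<^sub>R axis i 1)) has_real_derivative Q i j w) (at 0)"
    and cP: "\<And>i. continuous_on G (P i)"
    and cQ: "\<And>i j. continuous_on G (Q i j)"
    and mx: "\<And>z. z \<in> G \<Longrightarrow> g z \<le> g z0"
  shows "(\<Sum>i\<in>UNIV. \<Sum>j\<in>UNIV. \<xi>$i * \<xi>$j * Q i j z0) \<le> 0"
proof -
  obtain r where r: "r > 0" "ball z0 r \<subseteq> G" using G open_contains_ball by blast
  define \<rho> where "\<rho> = r / (norm \<xi> + 1)"
  have n1: "norm \<xi> + 1 > 0" "1 + norm \<xi> > 0" by (simp_all add: add_nonneg_pos add_pos_nonneg)
  have \<rho>: "\<rho> > 0" using r n1 by (simp add: \<rho>_def)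
  have inG: "z0 + h *\<^sub>R \<xi> \<in> G" if "\<bar>h\<bar> < \<rho>" for h
  proof -
    have "norm (h *\<^sub>R \<xi>) = \<bar>h\<bar> * norm \<xi>" by simp
    also have "\<dots> \<le> \<rho> * norm \<xi>" using that by (simp add: mult_right_mono)
    also have "\<dots> < r" using r n1 by (simp add: \<rho>_def field_simps)
    finally show ?thesis using r(2) by (auto simp: dist_norm)
  qed
  define \<psi>' where "\<psi>' h = (\<Sum>i\<in>UNIV. \<xi>$i * P i (z0 + h *\<^sub>R \<xi>))" for h
  have d1: "((\<lambda>h. g (z0 + h *\<^sub>R \<xi>)) has_real_derivative \<psi>' h) (at h)" if "\<bar>h\<bar> < \<rho>" for h
  proof -
    have gd: "(g has_derivative (\<lambda>v. \<Sum>i\<in>UNIV. v$i * P i (z0 + h *\<^sub>R \<xi>))) (at (z0 + h *\<^sub>R \<xi>))"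
      using C1[OF G(1) inG[OF that]] dP cP by blast
    have ld: "((\<lambda>h. z0 + h *\<^sub>R \<xi>) has_derivative (\<lambda>d. d *\<^sub>R \<xi>)) (at h)"
      by (auto intro!: derivative_eq_intros)
    have "((\<lambda>h. g (z0 + h *\<^sub>R \<xi>)) has_derivative (\<lambda>d. \<Sum>i\<in>UNIV. (d *\<^sub>R \<xi>)$i * P i (z0 + h *\<^sub>R \<xi>))) (at h)"
      using has_derivative_compose[OF ld gd] by simp
    moreover have "(\<lambda>d. \<Sum>i\<in>UNIV. (d *\<^sub>R \<xi>)$i * P i (z0 + h *\<^sub>R \<xi>)) = (*) (\<psi>' h)"
      by (rule ext) (simp add: \<psi>'_def sum_distrib_left sum_distrib_right mult_ac)
    ultimately show ?thesis by (simp add: has_field_derivative_def)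
  qed
  have d2: "(\<psi>' has_real_derivative (\<Sum>i\<in>UNIV. \<xi>$i * (\<Sum>j\<in>UNIV. \<xi>$j * Q j i z0))) (at 0)"
    unfolding \<psi>'_def
  proof (intro DERIV_sum DERIV_cmult)
    fix i
    have pd: "(P i has_derivative (\<lambda>v. \<Sum>j\<in>UNIV. v$j * Q j i z0)) (at (z0 + 0 *\<^sub>R \<xi>))"
      using C1[OF G(1), of z0 "P i" "\<lambda>j. Q j i"] G dQ cQ by simp
    have ld: "((\<lambda>h. z0 + h *\<^sub>R \<xi>) has_derivative (\<lambda>d. d *\<^sub>R \<xi>)) (at 0)"
      by (auto intro!: derivative_eq_intros)
    have "((\<lambda>h. P i (z0 + h *\<^sub>R \<xi>)) has_derivative (\<lambda>d. \<Sum>j\<in>UNIV. (d *\<^sub>R \<xi>)$j * Q j i z0)) (at 0)"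
      using has_derivative_compose[OF ld pd] by simp
    moreover have "(\<lambda>d. \<Sum>j\<in>UNIV. (d *\<^sub>R \<xi>)$j * Q j i z0) = (*) (\<Sum>j\<in>UNIV. \<xi>$j * Q j i z0)"
      by (rule ext) (simp add: sum_distrib_left sum_distrib_right mult_ac)
    ultimately show "((\<lambda>h. P i (z0 + h *\<^sub>R \<xi>)) has_real_derivative (\<Sum>j\<in>UNIV. \<xi>$j * Q j i z0)) (at 0)"
      by (simp add: has_field_derivative_def)
  qed
  have "(\<Sum>i\<in>UNIV. \<xi>$i * (\<Sum>j\<in>UNIV. \<xi>$j * Q j i z0)) \<le> 0"
    using second_max[OF \<rho> d1 d2] mx inG by simp
  moreover have "(\<Sum>i\<in>UNIV. \<xi>$i * (\<Sum>j\<in>UNIV. \<xi>$j * Q j i z0)) = (\<Sum>i\<in>UNIV. \<Sum>j\<in>UNIV. \<xi>$i * \<xi>$j * Q i j z0)"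
    by (subst sum.swap) (simp add: sum_distrib_left mult_ac)
  ultimately show ?thesis by simp
qed

lemma norm_two_axis: "norm (s *\<^sub>R axis i (1::real) + t *\<^sub>R axis j 1 :: real^'n) \<le> \<bar>s\<bar> + \<bar>t\<bar>"
proof -
  have "norm (s *\<^sub>R axis i (1::real) + t *\<^sub>R axis j 1 :: real^'n) \<le> norm (s *\<^sub>R axis i (1::real) :: real^'n) + norm (t *\<^sub>R axis j (1::real) :: real^'n)"
    by (rule norm_triangle_ineq)
  also have "\<dots> = \<bar>s\<bar> + \<bar>t\<bar>" by simp
  finally show ?thesis .
qed

lemma pt_dist: "dist (z0 + s *\<^sub>R axis i 1 + t *\<^sub>R axis j 1) (z0::real^'n) \<le> \<bar>s\<bar> + \<bar>t\<bar>"
proof -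
  have "dist (z0 + s *\<^sub>R axis i 1 + t *\<^sub>R axis j 1) z0 = norm (s *\<^sub>R axis i (1::real) + t *\<^sub>R axis j 1 :: real^'n)"
    unfolding dist_norm by (simp add: add.assoc)
  then show ?thesis using norm_two_axis[of s i t j] by simp
qed

lemma mixed_mvt:
  fixes g :: "real^'n \<Rightarrow> real" and P :: "'n \<Rightarrow> real^'n \<Rightarrow> real"
    and Q :: "'n \<Rightarrow> 'n \<Rightarrow> real^'n \<Rightarrow> real"
  assumes r: "ball z0 r \<subseteq> G"
    and dP: "\<And>w i. w \<in> G \<Longrightarrow> ((\<lambda>h. g (w + h *\<^sub>R axis i 1)) has_real_derivative P i w) (at 0)"
    and dQ: "\<And>w i j. w \<in> G \<Longrightarrow> ((\<lambda>h. P j (w + h *\<^sub>R axis i 1)) has_real_derivative Q i j w) (at 0)"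
    and h: "0 < h" "2 * h < r"
  shows "\<exists>\<zeta>. dist \<zeta> z0 < 2 * h \<and>
     g (z0 + h *\<^sub>R axis i 1 + h *\<^sub>R axis j 1) - g (z0 + h *\<^sub>R axis i 1) - g (z0 + h *\<^sub>R axis j 1) + g z0
       = h * h * Q j i \<zeta>"
proof -
  let ?ei = "axis i (1::real) :: real^'n" and ?ej = "axis j (1::real) :: real^'n"
  have ptG: "z0 + s *\<^sub>R ?ei + t *\<^sub>R ?ej \<in> G"
    if "0 \<le> s" "s \<le> h" "0 \<le> t" "t \<le> h" for s t
  proof -
    have "dist (z0 + s *\<^sub>R ?ei + t *\<^sub>R ?ej) z0 < r"
      using pt_dist[of z0 s i t j] that h by linarith
    then show ?thesis using r unfolding subset_iff mem_ball by (simp add: dist_commute)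
  qed
  have ptG1: "z0 + s *\<^sub>R ?ei \<in> G" if "0 \<le> s" "s \<le> h" for s
    using ptG[of s 0] that h by simp
  have ptG2: "z0 + s *\<^sub>R ?ei + h *\<^sub>R ?ej \<in> G" if "0 \<le> s" "s \<le> h" for s
    using ptG[of s h] that h by simp
  define \<phi> where "\<phi> s = g (z0 + s *\<^sub>R ?ei + h *\<^sub>R ?ej) - g (z0 + s *\<^sub>R ?ei)" for s
  have dphi: "(\<phi> has_real_derivative (P i (z0 + s *\<^sub>R ?ei + h *\<^sub>R ?ej) - P i (z0 + s *\<^sub>R ?ei))) (at s)"
    if "0 \<le> s" "s \<le> h" for s
    unfolding \<phi>_def
  proof (rule DERIV_diff)
    have weq: "z0 + s *\<^sub>R ?ei + h *\<^sub>R ?ej = (z0 + h *\<^sub>R ?ej) + s *\<^sub>R ?ei" by (simp add: algebra_simps)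
    have "((\<lambda>s. g ((z0 + h *\<^sub>R ?ej) + s *\<^sub>R ?ei)) has_real_derivative P i (z0 + s *\<^sub>R ?ei + h *\<^sub>R ?ej)) (at s)"
      by (rule dir_shift[OF dP[OF ptG2[OF that]] weq])
    moreover have "(\<lambda>s. g ((z0 + h *\<^sub>R ?ej) + s *\<^sub>R ?ei)) = (\<lambda>s. g (z0 + s *\<^sub>R ?ei + h *\<^sub>R ?ej))"
      by (rule ext) (simp add: algebra_simps)
    ultimately show "((\<lambda>s. g (z0 + s *\<^sub>R ?ei + h *\<^sub>R ?ej)) has_real_derivative P i (z0 + s *\<^sub>R ?ei + h *\<^sub>R ?ej)) (at s)"
      by simp
    show "((\<lambda>s. g (z0 + s *\<^sub>R ?ei)) has_real_derivative P i (z0 + s *\<^sub>R ?ei)) (at s)"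
      by (rule dir_shift[OF dP[OF ptG1[OF that]] refl])
  qed
  obtain s1 where s1: "0 < s1" "s1 < h"
    "\<phi> h - \<phi> 0 = (h - 0) * (P i (z0 + s1 *\<^sub>R ?ei + h *\<^sub>R ?ej) - P i (z0 + s1 *\<^sub>R ?ei))"
    using MVT2[OF h(1) dphi] by blast
  define chif where "chif t = P i (z0 + s1 *\<^sub>R ?ei + t *\<^sub>R ?ej)" for t
  have dchi: "(chif has_real_derivative Q j i (z0 + s1 *\<^sub>R ?ei + t *\<^sub>R ?ej)) (at t)"
    if "0 \<le> t" "t \<le> h" for t
  proof -
    have "z0 + s1 *\<^sub>R ?ei + t *\<^sub>R ?ej \<in> G" using ptG[of s1 t] s1 that by simp
    then show ?thesis unfolding chif_def by (rule dir_shift[OF dQ refl])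
  qed
  obtain t1 where t1: "0 < t1" "t1 < h"
    "chif h - chif 0 = (h - 0) * Q j i (z0 + s1 *\<^sub>R ?ei + t1 *\<^sub>R ?ej)"
    using MVT2[OF h(1) dchi] by blast
  show ?thesis
  proof (intro exI conjI)
    show "dist (z0 + s1 *\<^sub>R ?ei + t1 *\<^sub>R ?ej) z0 < 2 * h" using pt_dist[of z0 s1 i t1 j] s1 t1 by simp
    have A: "\<phi> h - \<phi> 0 = g (z0 + h *\<^sub>R ?ei + h *\<^sub>R ?ej) - g (z0 + h *\<^sub>R ?ei) - g (z0 + h *\<^sub>R ?ej) + g z0"
      by (simp add: \<phi>_def)
    have B: "chif h - chif 0 = P i (z0 + s1 *\<^sub>R ?ei + h *\<^sub>R ?ej) - P i (z0 + s1 *\<^sub>R ?ei)"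
      by (simp add: chif_def)
    have C: "g (z0 + h *\<^sub>R ?ei + h *\<^sub>R ?ej) - g (z0 + h *\<^sub>R ?ei) - g (z0 + h *\<^sub>R ?ej) + g z0
       = h * (P i (z0 + s1 *\<^sub>R ?ei + h *\<^sub>R ?ej) - P i (z0 + s1 *\<^sub>R ?ei))"
      using A s1(3) by simp
    have D: "P i (z0 + s1 *\<^sub>R ?ei + h *\<^sub>R ?ej) - P i (z0 + s1 *\<^sub>R ?ei) = h * Q j i (z0 + s1 *\<^sub>R ?ei + t1 *\<^sub>R ?ej)"
      using B t1(3) by simp
    show "g (z0 + h *\<^sub>R ?ei + h *\<^sub>R ?ej) - g (z0 + h *\<^sub>R ?ei) - g (z0 + h *\<^sub>R ?ej) + g z0
       = h * h * Q j i (z0 + s1 *\<^sub>R ?ei + t1 *\<^sub>R ?ej)"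
      unfolding C D by (simp add: mult.assoc)
  qed
qed

lemma schwarz:
  fixes g :: "real^'n \<Rightarrow> real" and P :: "'n \<Rightarrow> real^'n \<Rightarrow> real"
    and Q :: "'n \<Rightarrow> 'n \<Rightarrow> real^'n \<Rightarrow> real"
  assumes G: "open G" "z0 \<in> G"
    and dP: "\<And>w i. w \<in> G \<Longrightarrow> ((\<lambda>h. g (w + h *\<^sub>R axis i 1)) has_real_derivative P i w) (at 0)"
    and dQ: "\<And>w i j. w \<in> G \<Longrightarrow> ((\<lambda>h. P j (w + h *\<^sub>R axis i 1)) has_real_derivative Q i j w) (at 0)"
    and cQ: "\<And>i j. continuous_on G (Q i j)"
  shows "Q i j z0 = Q j i z0"
proof (rule ccontr)
  assume ne: "Q i j z0 \<noteq> Q j i z0"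
  define e where "e = \<bar>Q i j z0 - Q j i z0\<bar> / 2"
  have e: "e > 0" using ne by (simp add: e_def)
  obtain r where r: "r > 0" "ball z0 r \<subseteq> G" using G open_contains_ball by blast
  obtain d1 where d1: "d1 > 0" "\<And>w. w \<in> G \<Longrightarrow> dist w z0 < d1 \<Longrightarrow> dist (Q i j w) (Q i j z0) < e"
    using cQ[of i j] G e unfolding continuous_on_iff by blast
  obtain d2 where d2: "d2 > 0" "\<And>w. w \<in> G \<Longrightarrow> dist w z0 < d2 \<Longrightarrow> dist (Q j i w) (Q j i z0) < e"
    using cQ[of j i] G e unfolding continuous_on_iff by blast
  define h where "h = min r (min d1 d2) / 4"
  have h: "0 < h" "2 * h < r" "2 * h < d1" "2 * h < d2" using r d1 d2 by (auto simp: h_def)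
  obtain \<zeta>1 where z1: "dist \<zeta>1 z0 < 2 * h"
    "g (z0 + h *\<^sub>R axis i 1 + h *\<^sub>R axis j 1) - g (z0 + h *\<^sub>R axis i 1) - g (z0 + h *\<^sub>R axis j 1) + g z0
       = h * h * Q j i \<zeta>1"
    using mixed_mvt[OF r(2) dP dQ h(1,2), of i j] by blast
  obtain \<zeta>2 where z2: "dist \<zeta>2 z0 < 2 * h"
    "g (z0 + h *\<^sub>R axis j 1 + h *\<^sub>R axis i 1) - g (z0 + h *\<^sub>R axis j 1) - g (z0 + h *\<^sub>R axis i 1) + g z0
       = h * h * Q i j \<zeta>2"
    using mixed_mvt[OF r(2) dP dQ h(1,2), of j i] by blast
  have "z0 + h *\<^sub>R axis j 1 + h *\<^sub>R axis i 1 = z0 + h *\<^sub>R axis i 1 + h *\<^sub>R axis j (1::real)"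
    by (simp add: algebra_simps)
  note pe = this
  have "h * h * Q j i \<zeta>1 = h * h * Q i j \<zeta>2" using z1(2) z2(2)[unfolded pe] by linarith
  then have eq: "Q j i \<zeta>1 = Q i j \<zeta>2" using h by simp
  have inG: "\<zeta>1 \<in> G" "\<zeta>2 \<in> G" using z1 z2 h r by (auto simp: dist_commute)
  have "dist (Q i j \<zeta>2) (Q i j z0) < e" using d1(2)[OF inG(2)] z2 h by simp
  moreover have "dist (Q j i \<zeta>1) (Q j i z0) < e" using d2(2)[OF inG(1)] z1 h by simp
  ultimately have "\<bar>Q i j z0 - Q j i z0\<bar> < 2 * e" using eq by (simp add: dist_real_def)
  then show False by (simp add: e_def)
qed



definition qf :: "('n::finite \<Rightarrow> 'n \<Rightarrow> real) \<Rightarrow> ('n \<Rightarrow> real) \<Rightarrow> real" where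
  "qf S x = (\<Sum>i\<in>UNIV. \<Sum>j\<in>UNIV. S i j * x i * x j)"

definition dl :: "'n \<Rightarrow> 'n \<Rightarrow> real" where "dl k i = (if i = k then 1 else 0)"

lemma qf_shift:
  "qf S (\<lambda>i. x i + c * dl k i) =
   qf S x + c * ((\<Sum>j\<in>UNIV. S k j * x j) + (\<Sum>i\<in>UNIV. S i k * x i)) + c * c * S k k"
proof -
  have "qf S (\<lambda>i. x i + c * dl k i) =
     (\<Sum>i\<in>UNIV. \<Sum>j\<in>UNIV. S i j * x i * x j) + (\<Sum>i\<in>UNIV. \<Sum>j\<in>UNIV. c * (S i j * x i * dl k j))
     + (\<Sum>i\<in>UNIV. \<Sum>j\<in>UNIV. c * (S i j * dl k i * x j)) + (\<Sum>i\<in>UNIV. \<Sum>j\<in>UNIV. c * c * (S i j * dl k i * dl k j))"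
    unfolding qf_def by (simp add: algebra_simps sum.distrib)
  also have "(\<Sum>i\<in>UNIV. \<Sum>j\<in>UNIV. c * (S i j * x i * dl k j)) = c * (\<Sum>i\<in>UNIV. S i k * x i)"
    by (simp add: dl_def sum_distrib_left[symmetric] if_distrib cong: if_cong)
  also have "(\<Sum>i\<in>UNIV. \<Sum>j\<in>UNIV. c * (S i j * dl k i * x j)) = (\<Sum>i\<in>UNIV. dl k i * (c * (\<Sum>j\<in>UNIV. S i j * x j)))"
    by (simp add: sum_distrib_left mult_ac)
  also have "\<dots> = c * (\<Sum>j\<in>UNIV. S k j * x j)"
    unfolding dl_def by (subst sum.cong[OF refl, of _ _ "\<lambda>i. if i = k then c * (\<Sum>j\<in>UNIV. S k j * x j) else 0"]) auto
  also have "(\<Sum>i\<in>UNIV. \<Sum>j\<in>UNIV. c * c * (S i j * dl k i * dl k j)) = (\<Sum>i\<in>UNIV. dl k i * (c * c * (\<Sum>j\<in>UNIV. S i j * dl k j)))"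
    by (simp add: sum_distrib_left mult_ac)
  also have "\<dots> = (\<Sum>i\<in>UNIV. dl k i * (c * c * S i k))"
  proof -
    have "(\<Sum>j\<in>UNIV. S i j * dl k j) = S i k" for i
      unfolding dl_def by (subst sum.cong[OF refl, of _ _ "\<lambda>j. if j = k then S i k else 0"]) auto
    then show ?thesis by simp
  qed
  also have "\<dots> = c * c * S k k"
    unfolding dl_def by (subst sum.cong[OF refl, of _ _ "\<lambda>i. if i = k then c * c * S k k else 0"]) auto
  finally show ?thesis unfolding qf_def by (simp add: algebra_simps)
qed

lemma qf_zero: "qf S (\<lambda>i. 0) = 0" by (simp add: qf_def)

lemma trace_core:
  fixes H :: "'n::finite \<Rightarrow> 'n \<Rightarrow> real"
  assumes Hneg: "\<And>x. qf H x \<le> 0"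
  shows "finite T \<Longrightarrow> \<forall>S. (\<forall>i j. S i j = S j i) \<and> (\<forall>x. 0 \<le> qf S x) \<and> (\<forall>i j. i \<notin> T \<or> j \<notin> T \<longrightarrow> S i j = 0)
     \<longrightarrow> (\<Sum>i\<in>UNIV. \<Sum>j\<in>UNIV. S i j * H i j) \<le> 0"
proof (induction T rule: finite_induct)
  case empty then show ?case by simp
next
  case (insert k T)
  show ?case
  proof (intro allI impI)
    fix S assume SS: "(\<forall>i j. S i j = S j i) \<and> (\<forall>x. 0 \<le> qf S x) \<and> (\<forall>i j. i \<notin> insert k T \<or> j \<notin> insert k T \<longrightarrow> S i j = 0)"
    then have sym: "\<And>i j. S i j = S j i" and psd: "\<And>x. 0 \<le> qf S x"
      and sup: "\<And>i j. i \<notin> insert k T \<or> j \<notin> insert k T \<Longrightarrow> S i j = 0" by auto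
    have dl_q: "qf S (dl j) = S j j" for j
      using qf_shift[of S "\<lambda>i. 0" 1 j] by (simp add: qf_zero)
    have d0: "S k k \<ge> 0" using psd[of "dl k"] dl_q by simp
    show "(\<Sum>i\<in>UNIV. \<Sum>j\<in>UNIV. S i j * H i j) \<le> 0"
    proof (cases "S k k = 0")
      case True
      have skj: "S k j = 0" for j
      proof (rule ccontr)
        assume ne: "S k j \<noteq> 0"
        define c where "c = - (S j j + 1) / (2 * S k j)"
        have "qf S (\<lambda>i. dl j i + c * dl k i) = S j j + c * (S k j + S j k)"
          using qf_shift[of S "dl j" c k] True dl_q
          by (simp add: dl_def if_distrib cong: if_cong)
        also have "\<dots> = S j j + c * (2 * S k j)" using sym[of j k] by simp
        also have "\<dots> = -1" using ne by (simp add: c_def)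
        finally show False using psd[of "\<lambda>i. dl j i + c * dl k i"] by simp
      qed
      have "\<forall>i j. i \<notin> T \<or> j \<notin> T \<longrightarrow> S i j = 0"
        using sup skj sym by (metis insertE)
      then show ?thesis using insert.IH sym psd by blast
    next
      case False
      then have dpos: "S k k > 0" using d0 by simp
      define d where "d = S k k"
      define s where "s i = S k i" for i
      define S' where "S' i j = S i j - s i * s j / d" for i j
      have qS': "qf S' x = qf S x - (\<Sum>i\<in>UNIV. s i * x i) * (\<Sum>j\<in>UNIV. s j * x j) / d" for x
        unfolding qf_def S'_def
        by (simp add: algebra_simps sum_subtractf sum_distrib_left sum_distrib_right sum_divide_distrib)
      have psd': "0 \<le> qf S' x" for x
      proof -
        define \<sigma> where "\<sigma> = (\<Sum>j\<in>UNIV. s j * x j)"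
        have s2: "(\<Sum>i\<in>UNIV. S i k * x i) = \<sigma>" unfolding \<sigma>_def s_def using sym by (metis (no_types))
        have "0 \<le> qf S (\<lambda>i. x i + (- \<sigma> / d) * dl k i)" by (rule psd)
        also have "\<dots> = qf S x + (- \<sigma> / d) * (\<sigma> + \<sigma>) + (- \<sigma> / d) * (- \<sigma> / d) * d"
          using qf_shift[of S x "- \<sigma> / d" k] s2 by (simp add: \<sigma>_def s_def d_def)
        also have "\<dots> = qf S x - \<sigma> * \<sigma> / d" using dpos by (simp add: d_def field_simps)
        also have "\<dots> = qf S' x" using qS' by (simp add: \<sigma>_def)
        finally show ?thesis .
      qed
      have sym': "\<forall>i j. S' i j = S' j i" using sym by (simp add: S'_def mult.commute)
      have sup': "\<forall>i j. i \<notin> T \<or> j \<notin> T \<longrightarrow> S' i j = 0"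
      proof (intro allI impI)
        fix i j assume ij: "i \<notin> T \<or> j \<notin> T"
        have s0: "s m = 0" if "m \<notin> insert k T" for m using sup[of k m] that by (simp add: s_def)
        show "S' i j = 0"
        proof (cases "i = k \<or> j = k")
          case True
          then show ?thesis using dpos sym[of k j] sym[of i k]
            by (auto simp: S'_def s_def d_def)
        next
          case False
          then have "i \<notin> insert k T \<or> j \<notin> insert k T" using ij by auto
          then show ?thesis using sup s0 by (auto simp: S'_def)
        qed
      qed
      have IH: "(\<Sum>i\<in>UNIV. \<Sum>j\<in>UNIV. S' i j * H i j) \<le> 0"
        using insert.IH sym' psd' sup' by blast
      have "(\<Sum>i\<in>UNIV. \<Sum>j\<in>UNIV. S i j * H i j) =
          (\<Sum>i\<in>UNIV. \<Sum>j\<in>UNIV. S' i j * H i j) + qf H s / d"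
        unfolding S'_def qf_def
        by (simp add: algebra_simps sum_subtractf sum.distrib sum_divide_distrib)
      moreover have "qf H s / d \<le> 0" using Hneg[of s] dpos by (simp add: d_def divide_nonpos_pos)
      ultimately show ?thesis using IH by simp
    qed
  qed
qed

lemma trace_le:
  fixes A H :: "'n::finite \<Rightarrow> 'n \<Rightarrow> real"
  assumes A: "\<And>x. 0 \<le> qf A x" and Hn: "\<And>x. qf H x \<le> 0" and Hs: "\<And>i j. H i j = H j i"
  shows "(\<Sum>i\<in>UNIV. \<Sum>j\<in>UNIV. A i j * H i j) \<le> 0"
proof -
  define S where "S i j = (A i j + A j i) / 2" for i j
  have qS: "qf S x = qf A x" for x
  proof -
    have "qf S x = (\<Sum>i\<in>UNIV. \<Sum>j\<in>UNIV. A i j * x i * x j / 2 + A j i * x i * x j / 2)"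
      unfolding qf_def S_def by (simp add: add_divide_distrib distrib_right)
    also have "\<dots> = ((\<Sum>i\<in>UNIV. \<Sum>j\<in>UNIV. A i j * x i * x j) + (\<Sum>i\<in>UNIV. \<Sum>j\<in>UNIV. A j i * x i * x j)) / 2"
      by (simp add: sum.distrib add_divide_distrib sum_divide_distrib)
    also have "(\<Sum>i\<in>UNIV. \<Sum>j\<in>UNIV. A j i * x i * x j) = (\<Sum>i\<in>UNIV. \<Sum>j\<in>UNIV. A i j * x i * x j)"
      by (subst sum.swap) (simp add: mult_ac)
    finally show ?thesis by (simp add: qf_def)
  qed
  have symS: "\<forall>i j. S i j = S j i" by (simp add: S_def add.commute)
  have psdS: "\<forall>x. 0 \<le> qf S x" using qS A by simp
  have "(\<Sum>i\<in>UNIV. \<Sum>j\<in>UNIV. S i j * H i j) \<le> 0"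
    using trace_core[OF Hn, of UNIV] symS psdS by simp
  moreover have "(\<Sum>i\<in>UNIV. \<Sum>j\<in>UNIV. S i j * H i j) = (\<Sum>i\<in>UNIV. \<Sum>j\<in>UNIV. A i j * H i j)"
  proof -
    have "(\<Sum>i\<in>UNIV. \<Sum>j\<in>UNIV. A j i * H i j) = (\<Sum>i\<in>UNIV. \<Sum>j\<in>UNIV. A i j * H i j)"
      by (subst sum.swap) (simp add: Hs)
    moreover have "(\<Sum>i\<in>UNIV. \<Sum>j\<in>UNIV. S i j * H i j) = ((\<Sum>i\<in>UNIV. \<Sum>j\<in>UNIV. A i j * H i j) + (\<Sum>i\<in>UNIV. \<Sum>j\<in>UNIV. A j i * H i j)) / 2"
      unfolding S_def by (simp add: distrib_right sum.distrib add_divide_distrib sum_divide_distrib)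
    ultimately show ?thesis by simp
  qed
  ultimately show ?thesis by simp
qed



lemma CL_parts:
  assumes "x \<in> CL G" "t > 0" "z \<in> G"
  shows "((\<lambda>s. x s z) has_real_derivative pdt x t z) (at t)"
    and "((\<lambda>h. x t (z + h *\<^sub>R axis i 1)) has_real_derivative pdz i (x t) z) (at 0)"
    and "((\<lambda>h. pdz j (x t) (z + h *\<^sub>R axis i 1)) has_real_derivative pdz i (pdz j (x t)) z) (at 0)"
  using assms unfolding CL_def pdt_def pdz_def
  by (auto simp: DERIV_deriv_iff_real_differentiable)

lemma CL_cont:
  assumes "x \<in> CL G" "t > 0"
  shows "continuous_on G (pdz i (x t))" "continuous_on G (pdz i (pdz j (x t)))"
proof -
  have im: "(\<lambda>z. (t, z)) ` G \<subseteq> {0<..} \<times> G" using assms by auto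
  have c1: "continuous_on ({0<..} \<times> G) (\<lambda>(t,z). pdz i (x t) z)"
    and c2: "continuous_on ({0<..} \<times> G) (\<lambda>(t,z). pdz i (pdz j (x t)) z)"
    using assms(1) unfolding CL_def by auto
  have l: "continuous_on G (\<lambda>z. (t, z))" by (intro continuous_intros)
  show "continuous_on G (pdz i (x t))"
    using continuous_on_compose2[OF c1 l im] by simp
  show "continuous_on G (pdz i (pdz j (x t)))"
    using continuous_on_compose2[OF c2 l im] by simp
qed

lemma CL_cont0:
  assumes "x \<in> CL G"
  shows "continuous_on ({0..} \<times> closure G) (\<lambda>p. x (fst p) (snd p))"
  using assms unfolding CL_def by (simp add: split_def)

lemma comparison:
  fixes G :: "(real^'n) set"
  assumes st: "standing G a f" and h2: "H2 G f"
    and s1: "is_sol G a f x01 u1 x1" and s2: "is_sol G a f x02 u2 x2"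
    and i0: "\<And>z. z \<in> G \<Longrightarrow> x01 z \<le> x02 z"
    and bd: "\<And>t z. t \<ge> 0 \<Longrightarrow> z \<in> frontier G \<Longrightarrow> u1 t z \<le> u2 t z"
    and T: "T \<ge> 0" and zc: "zs \<in> closure G"
  shows "x1 T zs \<le> x2 T zs"
proof (rule ccontr)
  assume "\<not> x1 T zs \<le> x2 T zs"
  then have pos: "x1 T zs > x2 T zs" by simp
  have oG: "open G" and bG: "bounded G" using st by (auto simp: standing_def)
  obtain Kc where Kc: "Kc > 0" "\<And>z \<xi>. z \<in> closure G \<Longrightarrow> (\<Sum>i\<in>UNIV. \<Sum>j\<in>UNIV. a i j z * \<xi>$i * \<xi>$j) \<ge> Kc * (norm (\<xi>::real^'n))\<^sup>2"
    using st unfolding standing_def by blast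
  have x1CL: "x1 \<in> CL G" and pde1: "\<And>t z. t > 0 \<Longrightarrow> z \<in> G \<Longrightarrow> Lop a f x1 t z = 0"
    and ic1: "\<And>z. z \<in> G \<Longrightarrow> x1 0 z = x01 z" and bc1: "\<And>t z. t \<ge> 0 \<Longrightarrow> z \<in> frontier G \<Longrightarrow> x1 t z = u1 t z"
    using s1 unfolding is_sol_def by auto
  have x2CL: "x2 \<in> CL G" and pde2: "\<And>t z. t > 0 \<Longrightarrow> z \<in> G \<Longrightarrow> Lop a f x2 t z = 0"
    and ic2: "\<And>z. z \<in> G \<Longrightarrow> x2 0 z = x02 z" and bc2: "\<And>t z. t \<ge> 0 \<Longrightarrow> z \<in> frontier G \<Longrightarrow> x2 t z = u2 t z"
    using s2 unfolding is_sol_def by auto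
  define Ks where "Ks = {0..T} \<times> closure G"
  have Kcomp: "compact Ks" unfolding Ks_def using bG by (intro compact_Times compact_Icc) (simp add: compact_closure)
  have Ksub: "Ks \<subseteq> {0..} \<times> closure G" unfolding Ks_def by auto
  have Tin: "(T, zs) \<in> Ks" using T zc by (simp add: Ks_def)
  have cx1: "continuous_on Ks (\<lambda>p. x1 (fst p) (snd p))"
    using continuous_on_subset[OF CL_cont0[OF x1CL] Ksub] .
  have cx2: "continuous_on Ks (\<lambda>p. x2 (fst p) (snd p))"
    using continuous_on_subset[OF CL_cont0[OF x2CL] Ksub] .
  obtain M1 where M1: "\<And>p. p \<in> Ks \<Longrightarrow> \<bar>x1 (fst p) (snd p)\<bar> \<le> M1"
    using compact_imp_bounded[OF compact_continuous_image[OF cx1 Kcomp]] unfolding bounded_real by auto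
  obtain M2 where M2: "\<And>p. p \<in> Ks \<Longrightarrow> \<bar>x2 (fst p) (snd p)\<bar> \<le> M2"
    using compact_imp_bounded[OF compact_continuous_image[OF cx2 Kcomp]] unfolding bounded_real by auto
  define M where "M = max M1 M2"
  have bnd: "bounded {-M..M}" by simp
  have "\<exists>k>0. \<forall>w1\<in>{-M..M}. \<forall>w2\<in>{-M..M}. w1 > w2 \<longrightarrow> (\<forall>z\<in>G. \<forall>\<xi>. f z w1 \<xi> - f z w2 \<xi> < k * (w1 - w2))"
    using conjunct1[OF h2[unfolded H2_def], rule_format, OF bnd] .
  then obtain k where k1: "k > 0" and k2: "\<forall>w1\<in>{-M..M}. \<forall>w2\<in>{-M..M}. w1 > w2 \<longrightarrow> (\<forall>z\<in>G. \<forall>\<xi>. f z w1 \<xi> - f z w2 \<xi> < k * (w1 - w2))"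
    by blast
  have k: "k > 0" "\<And>w1 w2 z \<xi>. w1 \<in> {-M..M} \<Longrightarrow> w2 \<in> {-M..M} \<Longrightarrow> w1 > w2 \<Longrightarrow> z \<in> G \<Longrightarrow>
      f z w1 \<xi> - f z w2 \<xi> < k * (w1 - w2)"
    using k1 k2 by auto
  define lam where "lam = k + 1"
  define v where "v p = exp (- lam * fst p) * (x1 (fst p) (snd p) - x2 (fst p) (snd p))" for p
  have cv: "continuous_on Ks v" unfolding v_def
    by (intro continuous_intros cx1 cx2)
  obtain p0 where p0: "p0 \<in> Ks" "\<And>p. p \<in> Ks \<Longrightarrow> v p \<le> v p0"
    using continuous_attains_sup[OF Kcomp _ cv] Tin by blast
  define t0 where "t0 = fst p0"
  define z0 where "z0 = snd p0"
  have t0: "0 \<le> t0" "t0 \<le> T" and z0c: "z0 \<in> closure G" using p0(1) by (auto simp: Ks_def t0_def z0_def)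
  have "v (T, zs) > 0" using pos by (simp add: v_def)
  then have vp0: "v p0 > 0" using p0(2)[OF Tin] by simp
  define w0 where "w0 = x1 t0 z0 - x2 t0 z0"
  have w0: "w0 > 0" using vp0 by (simp add: v_def w0_def t0_def z0_def zero_less_mult_iff)
  have z0G: "z0 \<in> G"
  proof (rule ccontr)
    assume "z0 \<notin> G"
    then have "z0 \<in> frontier G" using z0c closure_Un_frontier by blast
    then have "x1 t0 z0 \<le> x2 t0 z0" using bc1[OF t0(1)] bc2[OF t0(1)] bd[OF t0(1)] by simp
    then show False using w0 by (simp add: w0_def)
  qed
  have t0p: "t0 > 0"
  proof (rule ccontr)
    assume "\<not> t0 > 0"
    then have "t0 = 0" using t0 by simp
    then have "x1 t0 z0 \<le> x2 t0 z0" using ic1 ic2 i0 z0G by simp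
    then show False using w0 by (simp add: w0_def)
  qed
  have p0eq: "p0 = (t0, z0)" by (simp add: t0_def z0_def)
  define D where "D = pdt x1 t0 z0 - pdt x2 t0 z0"
  have Dge: "D - lam * w0 \<ge> 0"
  proof (rule ccontr)
    assume neg: "\<not> D - lam * w0 \<ge> 0"
    define \<phi> where "\<phi> s = exp (- lam * s) * (x1 s z0 - x2 s z0)" for s
    have e: "((\<lambda>s. exp (- lam * s)) has_real_derivative exp (- lam * t0) * (- lam)) (at t0)"
      by (auto intro!: derivative_eq_intros)
    have dd: "((\<lambda>s. x1 s z0 - x2 s z0) has_real_derivative D) (at t0)"
      unfolding D_def by (intro DERIV_diff CL_parts(1)[OF x1CL t0p z0G] CL_parts(1)[OF x2CL t0p z0G])
    have "(\<phi> has_real_derivative exp (- lam * t0) * (- lam) * w0 + D * exp (- lam * t0)) (at t0)"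
      unfolding \<phi>_def w0_def using DERIV_mult[OF e dd] by simp
    moreover have "exp (- lam * t0) * (- lam) * w0 + D * exp (- lam * t0) = exp (- lam * t0) * (D - lam * w0)"
      by (simp add: algebra_simps)
    moreover have "exp (- lam * t0) * (D - lam * w0) < 0" using neg by (simp add: mult_pos_neg)
    ultimately have "(\<phi> has_real_derivative exp (- lam * t0) * (D - lam * w0)) (at t0)" "exp (- lam * t0) * (D - lam * w0) < 0"
      by simp_all
    then obtain d where d: "d > 0" "\<And>h. h > 0 \<Longrightarrow> h < d \<Longrightarrow> \<phi> t0 < \<phi> (t0 - h)"
      using DERIV_neg_dec_left by blast
    define h where "h = min d t0 / 2"
    have h: "h > 0" "h < d" "h < t0" using d t0p by (auto simp: h_def)
    have "(t0 - h, z0) \<in> Ks" using h t0 z0c by (simp add: Ks_def)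
    then have "v (t0 - h, z0) \<le> v p0" by (rule p0(2))
    then have "\<phi> (t0 - h) \<le> \<phi> t0" by (simp add: \<phi>_def v_def p0eq)
    then show False using d(2)[OF h(1,2)] by simp
  qed
  define g where "g z = x1 t0 z - x2 t0 z" for z
  define P where "P i z = pdz i (x1 t0) z - pdz i (x2 t0) z" for i z
  define Q where "Q i j z = pdz i (pdz j (x1 t0)) z - pdz i (pdz j (x2 t0)) z" for i j z
  have dP: "((\<lambda>h. g (w + h *\<^sub>R axis i 1)) has_real_derivative P i w) (at 0)" if "w \<in> G" for w i
    unfolding g_def P_def by (intro DERIV_diff CL_parts(2)[OF x1CL t0p that] CL_parts(2)[OF x2CL t0p that])
  have dQ: "((\<lambda>h. P j (w + h *\<^sub>R axis i 1)) has_real_derivative Q i j w) (at 0)" if "w \<in> G" for w i j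
    unfolding Q_def P_def by (intro DERIV_diff CL_parts(3)[OF x1CL t0p that] CL_parts(3)[OF x2CL t0p that])
  have cP: "continuous_on G (P i)" for i
    unfolding P_def by (intro continuous_on_diff CL_cont(1)[OF x1CL t0p] CL_cont(1)[OF x2CL t0p])
  have cQ: "continuous_on G (Q i j)" for i j
    unfolding Q_def by (intro continuous_on_diff CL_cont(2)[OF x1CL t0p] CL_cont(2)[OF x2CL t0p])
  have mx: "g z \<le> g z0" if "z \<in> G" for z
  proof -
    have tz: "(t0, z) \<in> Ks" using that t0 by (simp add: Ks_def closure_subset[THEN subsetD])
    have "v (t0, z) \<le> v (t0, z0)" using p0(2)[OF tz] p0eq by simp
    then show ?thesis by (simp add: v_def g_def)
  qed
  have quad: "(\<Sum>i\<in>UNIV. \<Sum>j\<in>UNIV. \<xi>$i * \<xi>$j * Q i j z0) \<le> 0" for \<xi> :: "real^'n"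
    by (rule quad_max[OF oG z0G dP dQ cP cQ mx])
  have schw: "Q i j z0 = Q j i z0" for i j
    by (rule schwarz[OF oG z0G dP dQ cQ])
  have Apsd: "0 \<le> qf (\<lambda>i j. a i j z0) x" for x
  proof -
    have "Kc * (norm (vec_lambda x))\<^sup>2 \<le> (\<Sum>i\<in>UNIV. \<Sum>j\<in>UNIV. a i j z0 * (vec_lambda x)$i * (vec_lambda x)$j)"
      using Kc(2)[OF z0c] by blast
    moreover have "0 \<le> Kc * (norm (vec_lambda x))\<^sup>2" using Kc(1) by simp
    ultimately show ?thesis by (simp add: qf_def)
  qed
  have Hneg: "qf (\<lambda>i j. Q i j z0) x \<le> 0" for x
    using quad[of "vec_lambda x"] by (simp add: qf_def mult_ac)
  have tr: "(\<Sum>i\<in>UNIV. \<Sum>j\<in>UNIV. a i j z0 * Q i j z0) \<le> 0"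
    using trace_le[of "\<lambda>i j. a i j z0" "\<lambda>i j. Q i j z0"] Apsd Hneg schw by blast
  obtain r where r: "r > 0" "ball z0 r \<subseteq> G" using oG z0G open_contains_ball by blast
  have P0: "P i z0 = 0" for i
  proof (rule DERIV_local_max[OF dP[OF z0G] r(1)], intro allI impI)
    fix y :: real assume "\<bar>0 - y\<bar> < r"
    then have "z0 + y *\<^sub>R axis i 1 \<in> G" using r by (auto simp: dist_norm intro!: subsetD[OF r(2)])
    then show "g (z0 + y *\<^sub>R axis i 1) \<le> g (z0 + 0 *\<^sub>R axis i 1)" using mx by simp
  qed
  have grad_eq: "grad (x1 t0) z0 = grad (x2 t0) z0"
    using P0 by (simp add: grad_def vec_eq_iff P_def)
  have e1: "pdt x1 t0 z0 = (\<Sum>i\<in>UNIV. \<Sum>j\<in>UNIV. a i j z0 * pdz i (pdz j (x1 t0)) z0) + f z0 (x1 t0 z0) (grad (x1 t0) z0)"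
    using pde1[OF t0p z0G] by (simp add: Lop_def)
  have e2: "pdt x2 t0 z0 = (\<Sum>i\<in>UNIV. \<Sum>j\<in>UNIV. a i j z0 * pdz i (pdz j (x2 t0)) z0) + f z0 (x2 t0 z0) (grad (x2 t0) z0)"
    using pde2[OF t0p z0G] by (simp add: Lop_def)
  have sumdiff: "(\<Sum>i\<in>UNIV. \<Sum>j\<in>UNIV. a i j z0 * pdz i (pdz j (x1 t0)) z0) - (\<Sum>i\<in>UNIV. \<Sum>j\<in>UNIV. a i j z0 * pdz i (pdz j (x2 t0)) z0)
      = (\<Sum>i\<in>UNIV. \<Sum>j\<in>UNIV. a i j z0 * Q i j z0)"
    by (simp add: Q_def right_diff_distrib sum_subtractf)
  have inW: "x1 t0 z0 \<in> {-M..M}" "x2 t0 z0 \<in> {-M..M}"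
    using M1[OF p0(1)] M2[OF p0(1)] by (auto simp: M_def p0eq)
  have "f z0 (x1 t0 z0) (grad (x2 t0) z0) - f z0 (x2 t0 z0) (grad (x2 t0) z0) < k * w0"
    using k(2)[OF inW, of z0] w0 z0G by (simp add: w0_def)
  then have "D < k * w0"
    using e1 e2 sumdiff tr grad_eq by (simp add: D_def)
  moreover have "lam * w0 = k * w0 + w0" by (simp add: lam_def algebra_simps)
  ultimately show False using Dge w0 by linarith
qed



definition good :: "('n::finite) space set \<Rightarrow> ('n space \<Rightarrow> real) \<Rightarrow> bool" where
  "good G g \<longleftrightarrow> continuous_on G g \<and> (\<exists>B. \<forall>z\<in>G. \<bar>g z\<bar> \<le> B)"

lemma good_int:
  fixes G :: "(real^'n) set" and h :: "real^'n \<Rightarrow> real"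
  assumes "open G" "bounded G" "continuous_on G h" "\<And>z. z \<in> G \<Longrightarrow> \<bar>h z\<bar> \<le> B"
  shows "h integrable_on G"
proof -
  have lm: "G \<in> lmeasurable" using assms by (simp add: lmeasurable_open)
  then have sl: "G \<in> sets lebesgue" by (simp add: fmeasurableD)
  show ?thesis
  proof (rule measurable_bounded_by_integrable_imp_integrable[of h G "\<lambda>x. B", OF _ _ _ sl])
    show "h \<in> borel_measurable (lebesgue_on G)"
      by (rule continuous_imp_measurable_on_sets_lebesgue[OF assms(3) sl])
    show "(\<lambda>x. B) integrable_on G" by (rule integrable_on_const[OF lm])
    show "norm (h x) \<le> B" if "x \<in> G" for x using assms(4)[OF that] by simp
  qed
qed

lemma good_pow_int:
  fixes G :: "(real^'n) set"
  assumes "open G" "bounded G" "good G g" "q > 0"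
  shows "(\<lambda>z. \<bar>g z\<bar> powr q) integrable_on G"
proof -
  obtain B where B: "\<And>z. z \<in> G \<Longrightarrow> \<bar>g z\<bar> \<le> B" and c: "continuous_on G g"
    using assms(3) unfolding good_def by blast
  have "continuous_on G (\<lambda>z. \<bar>g z\<bar> powr q)"
    using assms(4) by (intro continuous_on_powr' continuous_intros c) auto
  moreover have "\<bar>\<bar>g z\<bar> powr q\<bar> \<le> B powr q" if "z \<in> G" for z
    using powr_mono2[of q "\<bar>g z\<bar>" B] B[OF that] assms(4) by simp
  ultimately show ?thesis using good_int[OF assms(1,2)] by blast
qed

lemma good_bdd:
  assumes "good G g"
  shows "bdd_above (insert 0 ((\<lambda>z. \<bar>g z\<bar>) ` G))"
proof -
  obtain B where B: "\<And>z. z \<in> G \<Longrightarrow> \<bar>g z\<bar> \<le> B" using assms unfolding good_def by blast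
  show ?thesis by (rule bdd_above_insert[THEN iffD2], rule bdd_aboveI2[of _ _ B]) (use B in auto)
qed

lemma lp_nonneg:
  assumes "good G g"
  shows "0 \<le> lpnorm G p g"
  unfolding lpnorm_def using cSup_upper[OF insertI1 good_bdd[OF assms]] by auto

lemma lp_sup_upper:
  assumes "good G g" "z \<in> G"
  shows "\<bar>g z\<bar> \<le> lpnorm G \<infinity> g"
  unfolding lpnorm_def using cSup_upper[OF _ good_bdd[OF assms(1)], of "\<bar>g z\<bar>"] assms(2) by auto

lemma lp_cong:
  assumes "\<And>z. z \<in> G \<Longrightarrow> g z = h z"
  shows "lpnorm G p g = lpnorm G p h"
proof -
  have "(\<lambda>z. \<bar>g z\<bar>) ` G = (\<lambda>z. \<bar>h z\<bar>) ` G" using assms by (auto intro: image_cong)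
  moreover have "integral G (\<lambda>z. \<bar>g z\<bar> powr real_of_ereal p) = integral G (\<lambda>z. \<bar>h z\<bar> powr real_of_ereal p)"
    using assms by (intro integral_cong) auto
  ultimately show ?thesis unfolding lpnorm_def by simp
qed

lemma finite_p:
  assumes "1 \<le> p" "p \<noteq> \<infinity>"
  shows "real_of_ereal p \<ge> 1"
  using assms by (cases p) auto

lemma pow_three:
  fixes q a b c d :: real
  assumes "q \<ge> 1" "\<bar>a\<bar> \<le> \<bar>b\<bar> + \<bar>c\<bar> + \<bar>d\<bar>"
  shows "\<bar>a\<bar> powr q \<le> 3 powr q * (\<bar>b\<bar> powr q + \<bar>c\<bar> powr q + \<bar>d\<bar> powr q)"
proof -
  define m where "m = max \<bar>b\<bar> (max \<bar>c\<bar> \<bar>d\<bar>)"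
  have m0: "0 \<le> m" by (simp add: m_def)
  have "\<bar>b\<bar> \<le> m" "\<bar>c\<bar> \<le> m" "\<bar>d\<bar> \<le> m" by (auto simp: m_def)
  then have "\<bar>a\<bar> \<le> 3 * m" using assms(2) by linarith
  then have "\<bar>a\<bar> powr q \<le> (3 * m) powr q" using assms(1) by (intro powr_mono2) auto
  also have "\<dots> = 3 powr q * m powr q" by (simp add: powr_mult)
  also have "m powr q \<le> \<bar>b\<bar> powr q + \<bar>c\<bar> powr q + \<bar>d\<bar> powr q"
    unfolding m_def by (auto simp: max_def add_nonneg_nonneg)
  then have "3 powr q * m powr q \<le> 3 powr q * (\<bar>b\<bar> powr q + \<bar>c\<bar> powr q + \<bar>d\<bar> powr q)"
    by (intro mult_left_mono) auto
  finally show ?thesis .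
qed

lemma lp_three:
  fixes G :: "(real^'n) set"
  assumes G: "open G" "bounded G" and p: "1 \<le> p"
    and gd: "good G g" "good G g1" "good G g2" "good G g3"
    and le: "\<And>z. z \<in> G \<Longrightarrow> \<bar>g z\<bar> \<le> \<bar>g1 z\<bar> + \<bar>g2 z\<bar> + \<bar>g3 z\<bar>"
  shows "lpnorm G p g \<le> 9 * (lpnorm G p g1 + lpnorm G p g2 + lpnorm G p g3)"
proof (cases "p = \<infinity>")
  case True
  have n: "0 \<le> lpnorm G p g1" "0 \<le> lpnorm G p g2" "0 \<le> lpnorm G p g3" using lp_nonneg gd by auto
  have "lpnorm G p g \<le> lpnorm G p g1 + lpnorm G p g2 + lpnorm G p g3"
  proof -
    have "Sup (insert 0 ((\<lambda>z. \<bar>g z\<bar>) ` G)) \<le> lpnorm G p g1 + lpnorm G p g2 + lpnorm G p g3"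
    proof (rule cSup_least)
      fix y assume "y \<in> insert 0 ((\<lambda>z. \<bar>g z\<bar>) ` G)"
      then show "y \<le> lpnorm G p g1 + lpnorm G p g2 + lpnorm G p g3"
      proof
        assume "y = 0" then show ?thesis using n by simp
      next
        assume "y \<in> (\<lambda>z. \<bar>g z\<bar>) ` G"
        then obtain z where z: "z \<in> G" "y = \<bar>g z\<bar>" by blast
        show ?thesis using le[OF z(1)] lp_sup_upper[OF gd(2) z(1)] lp_sup_upper[OF gd(3) z(1)]
            lp_sup_upper[OF gd(4) z(1)] z(2) True by simp
      qed
    qed simp
    then show ?thesis using True by (simp add: lpnorm_def)
  qed
  then show ?thesis using n by simp
next
  case False
  define q where "q = real_of_ereal p"
  have q: "q \<ge> 1" using finite_p[OF p False] by (simp add: q_def)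
  define I where "I h = integral G (\<lambda>z. \<bar>h z\<bar> powr q)" for h
  have int: "(\<lambda>z. \<bar>h z\<bar> powr q) integrable_on G" if "good G h" for h
    using good_pow_int[OF G that] q by simp
  have I0: "0 \<le> I h" if "good G h" for h
    unfolding I_def by (rule integral_nonneg[OF int[OF that]]) simp
  have lpI: "lpnorm G p h = I h powr (1 / q)" for h
    using False by (simp add: lpnorm_def I_def q_def)
  have "I g \<le> integral G (\<lambda>z. 3 powr q * (\<bar>g1 z\<bar> powr q + \<bar>g2 z\<bar> powr q + \<bar>g3 z\<bar> powr q))"
    unfolding I_def
    by (rule integral_le[OF int[OF gd(1)]]) (use int gd q le pow_three in \<open>auto intro!: integrable_add integrable_on_mult_right\<close>)
  also have "\<dots> = 3 powr q * (I g1 + I g2 + I g3)"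
    using int gd by (simp add: I_def integral_add integrable_add)
  finally have Ig: "I g \<le> 3 powr q * (I g1 + I g2 + I g3)" .
  define Im where "Im = max (I g1) (max (I g2) (I g3))"
  have Im0: "0 \<le> Im" using I0 gd by (simp add: Im_def le_max_iff_disj)
  have "I g1 + I g2 + I g3 \<le> 3 * Im" by (simp add: Im_def)
  then have Ig2: "I g \<le> 3 powr q * (3 * Im)" using Ig by (meson order.trans mult_left_mono powr_ge_zero)
  have "lpnorm G p g = I g powr (1 / q)" by (rule lpI)
  also have "\<dots> \<le> (3 powr q * (3 * Im)) powr (1 / q)" using Ig2 I0[OF gd(1)] q by (intro powr_mono2) auto
  also have "\<dots> = 3 * (3 powr (1 / q) * Im powr (1 / q))"
    using q by (simp add: powr_mult powr_powr)
  also have "3 powr (1 / q) \<le> 3"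
  proof -
    have "3 powr (1 / q) \<le> 3 powr (1::real)" using q by (intro powr_mono) auto
    then show ?thesis by simp
  qed
  then have "3 * (3 powr (1 / q) * Im powr (1 / q)) \<le> 3 * (3 * Im powr (1 / q))"
    by (intro mult_left_mono mult_right_mono) auto
  also have "Im powr (1 / q) \<le> lpnorm G p g1 + lpnorm G p g2 + lpnorm G p g3"
  proof -
    have n: "0 \<le> I g1 powr (1/q)" "0 \<le> I g2 powr (1/q)" "0 \<le> I g3 powr (1/q)" by auto
    have "Im powr (1 / q) = I g1 powr (1/q) \<or> Im powr (1 / q) = I g2 powr (1/q) \<or> Im powr (1 / q) = I g3 powr (1/q)"
      by (auto simp: Im_def max_def)
    then show ?thesis using n by (auto simp: lpI)
  qed
  then have "3 * (3 * Im powr (1 / q)) \<le> 3 * (3 * (lpnorm G p g1 + lpnorm G p g2 + lpnorm G p g3))"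
    by simp
  finally show ?thesis by simp
qed

definition CG :: "(real^'n::finite) set \<Rightarrow> real" where
  "CG G = max 1 (integral G (\<lambda>z. 1::real))"

lemma CG_ge1: "CG G \<ge> 1" by (simp add: CG_def)

lemma good_const: "good G (\<lambda>z. c)"
  unfolding good_def by (auto intro: continuous_on_const)

lemma lp_const:
  fixes G :: "(real^'n) set"
  assumes G: "open G" "bounded G" and p: "1 \<le> p"
  shows "lpnorm G p (\<lambda>z. c) \<le> CG G * \<bar>c\<bar>"
proof (cases "p = \<infinity>")
  case True
  have "Sup (insert 0 ((\<lambda>z. \<bar>c\<bar>) ` G)) \<le> \<bar>c\<bar>"
    by (rule cSup_least) auto
  moreover have "\<bar>c\<bar> \<le> CG G * \<bar>c\<bar>" using CG_ge1[of G] by (simp add: mult_le_cancel_right1)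
  ultimately show ?thesis using True by (simp add: lpnorm_def)
next
  case False
  define q where "q = real_of_ereal p"
  have q: "q \<ge> 1" using finite_p[OF p False] by (simp add: q_def)
  define \<mu> where "\<mu> = integral G (\<lambda>z. 1::real)"
  have lm: "G \<in> lmeasurable" using G by (simp add: lmeasurable_open)
  have \<mu>0: "0 \<le> \<mu>" unfolding \<mu>_def by (rule integral_nonneg[OF integrable_on_const[OF lm]]) simp
  have "integral G (\<lambda>z. \<bar>c\<bar> powr q) = \<bar>c\<bar> powr q * \<mu>"
    using integral_mult_right[of G "\<bar>c\<bar> powr q" "\<lambda>z. 1"] by (simp add: \<mu>_def)
  then have "lpnorm G p (\<lambda>z. c) = (\<bar>c\<bar> powr q * \<mu>) powr (1 / q)"
    using False by (simp add: lpnorm_def q_def)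
  also have "\<dots> = \<bar>c\<bar> * \<mu> powr (1 / q)"
    using q by (simp add: powr_mult powr_powr)
  also have "\<mu> powr (1 / q) \<le> CG G"
  proof -
    have "\<mu> powr (1 / q) \<le> (max 1 \<mu>) powr (1 / q)" using q \<mu>0 by (intro powr_mono2) auto
    also have "\<dots> \<le> (max 1 \<mu>) powr (1::real)" using q by (intro powr_mono) auto
    finally show ?thesis by (simp add: CG_def \<mu>_def)
  qed
  then have "\<bar>c\<bar> * \<mu> powr (1 / q) \<le> \<bar>c\<bar> * CG G" by (intro mult_left_mono) auto
  finally show ?thesis by (simp add: mult.commute)
qed



section \<open>Comparison functions\<close>

lemma K_mono: "class_K \<gamma> \<Longrightarrow> 0 \<le> r \<Longrightarrow> r \<le> s \<Longrightarrow> \<gamma> r \<le> \<gamma> s"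
  unfolding class_K_def by (cases "r = s") (auto intro!: less_imp_le strict_mono_onD[of "{0..}" \<gamma>])

lemma K_nonneg: "class_K \<gamma> \<Longrightarrow> 0 \<le> r \<Longrightarrow> 0 \<le> \<gamma> r"
  using K_mono[of \<gamma> 0 r] unfolding class_K_def by simp

lemma KL_K: "class_KL \<beta> \<Longrightarrow> 0 \<le> t \<Longrightarrow> class_K (\<lambda>r. \<beta> r t)"
  unfolding class_KL_def by simp

lemma KL_anti: "class_KL \<beta> \<Longrightarrow> 0 \<le> r \<Longrightarrow> 0 \<le> s \<Longrightarrow> s \<le> t \<Longrightarrow> \<beta> r t \<le> \<beta> r s"
  unfolding class_KL_def monotone_on_def by auto

lemma KL_nonneg: "class_KL \<beta> \<Longrightarrow> 0 \<le> r \<Longrightarrow> 0 \<le> t \<Longrightarrow> 0 \<le> \<beta> r t"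
  using K_nonneg[OF KL_K] by blast

lemma KL_mono: "class_KL \<beta> \<Longrightarrow> 0 \<le> t \<Longrightarrow> 0 \<le> r \<Longrightarrow> r \<le> s \<Longrightarrow> \<beta> r t \<le> \<beta> s t"
  using K_mono[OF KL_K] by blast

lemma KL_sum:
  assumes "class_KL \<beta>" "0 \<le> a" "0 \<le> b" "0 \<le> t"
  shows "\<beta> (a + b) t \<le> \<beta> (2 * a) t + \<beta> (2 * b) 0"
proof -
  have n: "0 \<le> \<beta> (2 * a) t" "0 \<le> \<beta> (2 * b) t" using KL_nonneg[OF assms(1)] assms by auto
  have b0: "\<beta> (2 * b) t \<le> \<beta> (2 * b) 0" using KL_anti[OF assms(1)] assms by auto
  show ?thesis
  proof (cases "a \<le> b")
    case True
    then have "\<beta> (a + b) t \<le> \<beta> (2 * b) t" using KL_mono[OF assms(1)] assms by auto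
    then show ?thesis using n b0 by linarith
  next
    case False
    then have "\<beta> (a + b) t \<le> \<beta> (2 * a) t" using KL_mono[OF assms(1)] assms by auto
    then show ?thesis using n b0 by linarith
  qed
qed

lemma comp_scale:
  assumes cc: "continuous_on {0..} (g::real \<Rightarrow> real)" and B: "B > 0"
  shows "continuous_on {0..} (\<lambda>r. g (B * r))"
proof -
  have im: "(\<lambda>r. B * r) ` {0..} \<subseteq> {0..}" using B by auto
  have cm: "continuous_on {0..} (\<lambda>r::real. B * r)" by (intro continuous_intros)
  from continuous_on_compose2[OF cc cm im] show ?thesis .
qed

lemma newKL:
  assumes b: "class_KL \<beta>" and A: "A > 0" and B: "B > 0"
  shows "class_KL (\<lambda>r t. A * \<beta> (B * r) t)"
proof -
  have c: "continuous_on ({0..} \<times> {0..}) (\<lambda>(r, t). \<beta> r t)" using b unfolding class_KL_def by blast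
  have im: "(\<lambda>p. (B * fst p, snd p)) ` ({0..} \<times> {0..}) \<subseteq> {0..} \<times> {0..}" using B by auto
  have cm: "continuous_on ({0..} \<times> {0..}) (\<lambda>p::real\<times>real. (B * fst p, snd p))" by (intro continuous_intros)
  from continuous_on_compose2[OF c cm im]
  have "continuous_on ({0..} \<times> {0..}) (\<lambda>p. \<beta> (B * fst p) (snd p))" by (simp add: split_def)
  then have "continuous_on ({0..} \<times> {0..}) (\<lambda>p. A * \<beta> (B * fst p) (snd p))"
    by (rule continuous_on_mult_left)
  then have c1: "continuous_on ({0..} \<times> {0..}) (\<lambda>(r, t). A * \<beta> (B * r) t)"
    by (simp add: split_def)
  have k: "class_K (\<lambda>r. A * \<beta> (B * r) t)" if t: "t \<ge> 0" for t
  proof -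
    have K: "class_K (\<lambda>r. \<beta> r t)" by (rule KL_K[OF b t])
    have cc: "continuous_on {0..} (\<lambda>r. \<beta> r t)" using K unfolding class_K_def by blast
    have k1: "continuous_on {0..} (\<lambda>r. A * \<beta> (B * r) t)"
      by (rule continuous_on_mult_left[OF comp_scale[OF cc B]])
    have k2: "A * \<beta> (B * 0) t = 0" using K unfolding class_K_def by simp
    have k3: "strict_mono_on {0..} (\<lambda>r. A * \<beta> (B * r) t)"
    proof (rule strict_mono_onI)
      fix r s :: real assume rs: "r \<in> {0..}" "s \<in> {0..}" "r < s"
      have sm: "strict_mono_on {0..} (\<lambda>r. \<beta> r t)" using K unfolding class_K_def by blast
      have "\<beta> (B * r) t < \<beta> (B * s) t"
        using strict_mono_onD[OF sm, of "B * r" "B * s"] rs B by simp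
      then show "A * \<beta> (B * r) t < A * \<beta> (B * s) t" using A by simp
    qed
    show ?thesis unfolding class_K_def using k1 k2 k3 by simp
  qed
  have a1: "antimono_on {0..} (\<lambda>t. A * \<beta> (B * r) t)" if r: "r \<ge> 0" for r
  proof (rule monotone_onI)
    fix s t :: real assume st: "s \<in> {0..}" "t \<in> {0..}" "s \<le> t"
    have "\<beta> (B * r) t \<le> \<beta> (B * r) s" using KL_anti[OF b, of "B * r" s t] r B st by simp
    then show "A * \<beta> (B * r) t \<le> A * \<beta> (B * r) s" using A by simp
  qed
  have a2: "((\<lambda>t. A * \<beta> (B * r) t) \<longlongrightarrow> 0) at_top" if r: "r \<ge> 0" for r
  proof -
    have "\<forall>r\<ge>0. antimono_on {0..} (\<beta> r) \<and> ((\<beta> r) \<longlongrightarrow> 0) at_top" using b unfolding class_KL_def by blast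
    then have "(\<beta> (B * r) \<longlongrightarrow> 0) at_top" using r B by simp
    then show ?thesis by (rule tendsto_mult_right_zero)
  qed
  show ?thesis unfolding class_KL_def
  proof (intro conjI allI impI)
    show "continuous_on ({0..} \<times> {0..}) (\<lambda>(r, t). A * \<beta> (B * r) t)" by (rule c1)
    fix t :: real assume "0 \<le> t" then show "class_K (\<lambda>r. A * \<beta> (B * r) t)" by (rule k)
  next
    fix r :: real assume "0 \<le> r"
    then show "antimono_on {0..} (\<lambda>t. A * \<beta> (B * r) t)" "((\<lambda>t. A * \<beta> (B * r) t) \<longlongrightarrow> 0) at_top"
      by (rule a1, rule a2)
  qed
qed

lemma newK:
  assumes b: "class_KL \<beta>" and g: "class_K \<gamma>" and pos: "A > 0" "B > 0" "C > 0" "D > 0"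
  shows "class_K (\<lambda>s. A * \<beta> (B * s) 0 + C * \<gamma> s + D * s)"
proof -
  have K: "class_K (\<lambda>r. \<beta> r 0)" by (rule KL_K[OF b]) simp
  have cc: "continuous_on {0..} (\<lambda>r. \<beta> r 0)" using K unfolding class_K_def by blast
  have c1: "continuous_on {0..} (\<lambda>r. \<beta> (B * r) 0)" by (rule comp_scale[OF cc pos(2)])
  have c2: "continuous_on {0..} \<gamma>" using g unfolding class_K_def by simp
  have cont: "continuous_on {0..} (\<lambda>s. A * \<beta> (B * s) 0 + C * \<gamma> s + D * s)"
    by (intro continuous_intros c1 c2)
  have z: "A * \<beta> (B * 0) 0 + C * \<gamma> 0 + D * 0 = 0" using K g unfolding class_K_def by simp
  have sm: "strict_mono_on {0..} (\<lambda>s. A * \<beta> (B * s) 0 + C * \<gamma> s + D * s)"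
  proof (rule strict_mono_onI)
    fix r s :: real assume rs: "r \<in> {0..}" "s \<in> {0..}" "r < s"
    have "\<beta> (B * r) 0 \<le> \<beta> (B * s) 0" using KL_mono[OF b, of 0 "B * r" "B * s"] rs pos by auto
    moreover have "\<gamma> r \<le> \<gamma> s" using K_mono[OF g, of r s] rs by auto
    ultimately show "A * \<beta> (B * r) 0 + C * \<gamma> r + D * r < A * \<beta> (B * s) 0 + C * \<gamma> s + D * s"
      using pos rs by (intro add_le_less_mono add_mono mult_left_mono) auto
  qed
  show ?thesis unfolding class_K_def using cont z sm by simp
qed

lemma K_right_limit:
  assumes g: "class_K \<gamma>" and m: "0 \<le> m"
    and le: "\<And>c. c > m \<Longrightarrow> L \<le> R + \<gamma> c"
  shows "L \<le> R + \<gamma> m"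
proof (rule ccontr)
  assume "\<not> L \<le> R + \<gamma> m"
  then have d: "L - R - \<gamma> m > 0" by simp
  have "continuous_on {0..} \<gamma>" using g unfolding class_K_def by simp
  then have "\<exists>\<delta>>0. \<forall>c\<in>{0..}. dist c m < \<delta> \<longrightarrow> dist (\<gamma> c) (\<gamma> m) < L - R - \<gamma> m"
    using m d unfolding continuous_on_iff by simp
  then obtain \<delta> where \<delta>: "\<delta> > 0" "\<And>c. c \<in> {0..} \<Longrightarrow> dist c m < \<delta> \<Longrightarrow> dist (\<gamma> c) (\<gamma> m) < L - R - \<gamma> m"
    by blast
  have "dist (\<gamma> (m + \<delta>/2)) (\<gamma> m) < L - R - \<gamma> m" using \<delta> m by (intro \<delta>(2)) (auto simp: dist_real_def)
  moreover have "L \<le> R + \<gamma> (m + \<delta>/2)" using le \<delta> by simp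
  ultimately show False by (simp add: dist_real_def)
qed

lemma const_Uset: "(\<lambda>s z. k) \<in> Uset G"
proof -
  have a: "\<forall>t::real\<ge>0. continuous_on (frontier G) (\<lambda>z. k)" by (simp add: continuous_on_const)
  have b: "\<forall>t::real\<ge>0. \<forall>e::real>0. \<exists>d>0. \<forall>s::real\<ge>0. \<bar>s - t\<bar> < d \<longrightarrow> (\<forall>z\<in>frontier G. \<bar>k - k\<bar> \<le> e)"
    using gt_ex[of "0::real"] by auto
  have c: "\<exists>M. \<forall>t::real\<ge>0. \<forall>z\<in>frontier G. \<bar>k\<bar> \<le> M" by (intro exI[of _ "\<bar>k\<bar>"]) simp
  show ?thesis unfolding Uset_def using a b c by (simp only: mem_Collect_eq)
qed

lemma const_Uc: "(\<lambda>s z. k) \<in> Uc G"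
  unfolding Uc_def using const_Uset by auto

lemma unorm_bdd:
  assumes "u \<in> Uset G"
  shows "bdd_above (insert 0 {\<bar>u t z\<bar> | t z. t \<ge> 0 \<and> z \<in> frontier G})"
proof -
  obtain M where M: "\<And>t z. t \<ge> 0 \<Longrightarrow> z \<in> frontier G \<Longrightarrow> \<bar>u t z\<bar> \<le> M"
    using assms unfolding Uset_def by blast
  show ?thesis by (rule bdd_aboveI[of _ "max 0 M"]) (use M in \<open>auto simp: le_max_iff_disj\<close>)
qed

lemma unorm_ge:
  assumes "u \<in> Uset G" "t \<ge> 0" "z \<in> frontier G"
  shows "\<bar>u t z\<bar> \<le> unorm G u"
  unfolding unorm_def using cSup_upper[OF _ unorm_bdd[OF assms(1)], of "\<bar>u t z\<bar>"] assms by blast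

lemma unorm_nonneg:
  assumes "u \<in> Uset G"
  shows "0 \<le> unorm G u"
  unfolding unorm_def using cSup_upper[OF insertI1 unorm_bdd[OF assms(1)]] .

lemma unorm_const: "unorm G (\<lambda>s z. k) \<le> \<bar>k\<bar>"
  unfolding unorm_def by (rule cSup_least) auto

lemma cont_closure_good:
  fixes G :: "(real^'n) set"
  assumes "bounded G" "continuous_on (closure G) h"
  shows "good G h"
proof -
  have "compact (closure G)" using assms(1) by (simp add: compact_closure)
  then have "bounded (h ` closure G)" using compact_imp_bounded compact_continuous_image assms(2) by blast
  then obtain B where "\<And>z. z \<in> closure G \<Longrightarrow> \<bar>h z\<bar> \<le> B" unfolding bounded_real by auto
  then show ?thesis unfolding good_def using continuous_on_subset[OF assms(2) closure_subset] closure_subset by blast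
qed

lemma restr_on_closure: "z \<in> closure G \<Longrightarrow> restr G h z = h z"
  by (simp add: restr_def)

lemma cont_restr:
  assumes "continuous_on (closure G) h"
  shows "continuous_on (closure G) (restr G h)"
  using continuous_on_cong[of "closure G" "closure G" "restr G h" h] assms by (simp add: restr_def)

lemma good_restr:
  fixes G :: "(real^'n) set"
  assumes "bounded G" "continuous_on (closure G) h"
  shows "good G (restr G h)"
  by (rule cont_closure_good[OF assms(1) cont_restr[OF assms(2)]])

lemma H1_X: "H1 G a f X Uad \<Longrightarrow> x \<in> X \<Longrightarrow> continuous_on (closure G) x \<and> (\<forall>z. z \<notin> closure G \<longrightarrow> x z = 0)"
proof -
  assume h: "H1 G a f X Uad" "x \<in> X"
  have "X \<subseteq> C0cl G" using h(1) unfolding H1_def by (rule conjunct1)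
  then have "x \<in> C0cl G" using h(2) by (rule subsetD)
  then show ?thesis unfolding C0cl_def by simp
qed

lemma H1_add: "H1 G a f X Uad \<Longrightarrow> x \<in> X \<Longrightarrow> y \<in> X \<Longrightarrow> (\<lambda>z. x z + y z) \<in> X"
  unfolding H1_def by (drule conjunct1[OF conjunct2]) blast

lemma H1_smul: "H1 G a f X Uad \<Longrightarrow> x \<in> X \<Longrightarrow> (\<lambda>z. c * x z) \<in> X"
  unfolding H1_def by (drule conjunct1[OF conjunct2[OF conjunct2]]) blast

lemma H1_const: "H1 G a f X Uad \<Longrightarrow> restr G (\<lambda>_. c) \<in> X"
  unfolding H1_def by (drule conjunct1[OF conjunct2[OF conjunct2[OF conjunct2]]]) blast

lemma H1_U: "H1 G a f X Uad \<Longrightarrow> x0 \<in> X \<Longrightarrow>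
   Uad x0 \<noteq> {} \<and>
        Uad x0 \<subseteq> {v \<in> Uset G. \<forall>z\<in>frontier G. v 0 z = x0 z} \<and>
        (\<forall>v\<in>Uset G. (\<forall>t\<ge>0. \<forall>z\<in>frontier G. v t z = x0 z) \<longrightarrow> v \<in> Uad x0) \<and>
        (\<forall>u\<in>Uad x0. \<exists>x. is_sol G a f x0 u x \<and> (\<forall>t\<ge>0. x t \<in> X))"
  unfolding H1_def by (drule conjunct2[OF conjunct2[OF conjunct2[OF conjunct2]]]) (erule bspec)

lemma sol_cont:
  assumes "is_sol G a f x0 u x" "t \<ge> 0"
  shows "continuous_on (closure G) (x t)"
proof -
  have c: "continuous_on ({0..} \<times> closure G) (\<lambda>p. x (fst p) (snd p))"
    using assms(1) CL_cont0 unfolding is_sol_def by blast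
  have "continuous_on (closure G) (\<lambda>z. (t, z))" by (intro continuous_intros)
  moreover have "(\<lambda>z. (t, z)) ` closure G \<subseteq> {0..} \<times> closure G" using assms(2) by auto
  ultimately have "continuous_on (closure G) (\<lambda>z. (\<lambda>p. x (fst p) (snd p)) ((\<lambda>z. (t, z)) z))"
    by (rule continuous_on_compose2[OF c])
  then show ?thesis by simp
qed

lemma phi_sol:
  assumes su: "sol_unique G a f X Uad" and x0: "x0 \<in> X" "u \<in> Uad x0"
    and s: "is_sol G a f x0 u x" and t: "t \<ge> 0"
  shows "phi G a f t x0 u = restr G (x t)"
  unfolding phi_def
proof (rule the_equality)
  show "\<exists>x'. is_sol G a f x0 u x' \<and> restr G (x t) = restr G (x' t)" using s by blast
  fix w assume "\<exists>x'. is_sol G a f x0 u x' \<and> w = restr G (x' t)"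
  then obtain x' where x': "is_sol G a f x0 u x'" "w = restr G (x' t)" by blast
  have "x' t z = x t z" if "z \<in> closure G" for z
    using su[unfolded sol_unique_def, rule_format, OF x0(1) x0(2) conjI[OF x'(1) s] t that] .
  then have "\<forall>z\<in>closure G. x' t z = x t z" by blast
  then show "w = restr G (x t)" using x'(2) by (auto simp: restr_def)
qed

lemma phi_ex:
  assumes h1: "H1 G a f X Uad" and su: "sol_unique G a f X Uad" and x0: "x0 \<in> X" "u \<in> Uad x0"
  obtains x where "is_sol G a f x0 u x" "\<And>t. t \<ge> 0 \<Longrightarrow> phi G a f t x0 u = restr G (x t)"
proof -
  obtain x where "is_sol G a f x0 u x" using H1_U[OF h1 x0(1)] x0(2) by blast
  then show ?thesis using that phi_sol[OF su x0] by blast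
qed



lemma good_X: "H1 G a f X Uad \<Longrightarrow> bounded G \<Longrightarrow> x \<in> X \<Longrightarrow> good G x"
  using H1_X cont_closure_good by blast

lemma phi_good:
  fixes G :: "(real^'n) set"
  assumes h1: "H1 G a f X Uad" and su: "sol_unique G a f X Uad" and bG: "bounded G"
    and x0: "x0 \<in> X" "u \<in> Uad x0" and t: "t \<ge> 0"
  shows "continuous_on (closure G) (phi G a f t x0 u)" "good G (phi G a f t x0 u)"
proof -
  obtain xs where xs: "is_sol G a f x0 u xs" "\<And>t. t \<ge> 0 \<Longrightarrow> phi G a f t x0 u = restr G (xs t)"
    using phi_ex[OF h1 su x0] by blast
  have c: "continuous_on (closure G) (xs t)" by (rule sol_cont[OF xs(1) t])
  show "continuous_on (closure G) (phi G a f t x0 u)" using cont_restr[OF c] xs(2)[OF t] by simp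
  show "good G (phi G a f t x0 u)" using good_restr[OF bG c] xs(2)[OF t] by simp
qed

lemma frontier_closure: "z \<in> frontier G \<Longrightarrow> z \<in> closure G"
  using closure_Un_frontier by blast

lemma Q_setup:
  fixes G :: "(real^'n) set"
  assumes h1: "H1 G a f X Uad" and y: "y \<in> Yset G X"
  shows "restr G (\<lambda>z. y z + k) \<in> X" "(\<lambda>s z. k) \<in> Uad (restr G (\<lambda>z. y z + k))" "(\<lambda>s z. k) \<in> Uc G"
    "continuous_on (closure G) (restr G (\<lambda>z. y z + k))"
proof -
  have yX: "y \<in> X" and y0: "\<And>z. z \<in> frontier G \<Longrightarrow> y z = 0" using y unfolding Yset_def by auto
  have yc: "continuous_on (closure G) y" and yz: "\<And>z. z \<notin> closure G \<Longrightarrow> y z = 0"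
    using H1_X[OF h1 yX] by auto
  have eq: "restr G (\<lambda>z. y z + k) = (\<lambda>z. y z + restr G (\<lambda>_. k) z)"
    by (rule ext) (simp add: restr_def yz)
  show xX: "restr G (\<lambda>z. y z + k) \<in> X" unfolding eq by (rule H1_add[OF h1 yX H1_const[OF h1]])
  have A: "\<forall>v\<in>Uset G. (\<forall>t\<ge>0. \<forall>z\<in>frontier G. v t z = restr G (\<lambda>z. y z + k) z) \<longrightarrow> v \<in> Uad (restr G (\<lambda>z. y z + k))"
    using conjunct1[OF conjunct2[OF conjunct2[OF H1_U[OF h1 xX]]]] .
  have B: "\<forall>t\<ge>0. \<forall>z\<in>frontier G. k = restr G (\<lambda>z. y z + k) z"
    using y0 frontier_closure by (auto simp: restr_def)
  show "(\<lambda>s z. k) \<in> Uad (restr G (\<lambda>z. y z + k))"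
    using mp[OF bspec[OF A const_Uset[of k G]] B] .
  show "(\<lambda>s z. k) \<in> Uc G" by (rule const_Uc)
  show "continuous_on (closure G) (restr G (\<lambda>z. y z + k))"
    by (intro cont_restr continuous_intros yc)
qed

lemma phiY_good:
  fixes G :: "(real^'n) set"
  assumes h1: "H1 G a f X Uad" and su: "sol_unique G a f X Uad" and bG: "bounded G"
    and y: "y \<in> Yset G X" and t: "t \<ge> 0"
  shows "good G (phiY G a f t y k)"
proof -
  have c: "continuous_on (closure G) (phi G a f t (restr G (\<lambda>z. y z + k)) (\<lambda>s z. k))"
    by (rule phi_good(1)[OF h1 su bG Q_setup(1,2)[OF h1 y] t])
  show ?thesis unfolding phiY_def by (intro good_restr bG continuous_intros c)
qed

lemma sandwich:
  fixes G :: "(real^'n) set"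
  assumes st: "standing G a f" and h1: "H1 G a f X Uad" and h2: "H2 G f" and h3: "H3 G X"
    and su: "sol_unique G a f X Uad" and x: "x \<in> X" and u: "u \<in> Uad x"
    and c: "c > unorm G u"
  obtains y1 y2 where "y1 \<in> Yset G X" "y2 \<in> Yset G X"
    "\<And>z. z \<in> G \<Longrightarrow> \<bar>y1 z\<bar> \<le> \<bar>x z\<bar> + \<bar>c\<bar>" "\<And>z. z \<in> G \<Longrightarrow> \<bar>y2 z\<bar> \<le> \<bar>x z\<bar> + \<bar>c\<bar>"
    "\<And>t z. t \<ge> 0 \<Longrightarrow> z \<in> G \<Longrightarrow>
       \<bar>phi G a f t x u z\<bar> \<le> \<bar>phiY G a f t y1 c z\<bar> + \<bar>phiY G a f t y2 (-c) z\<bar> + \<bar>c\<bar>"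
proof -
  have oG: "open G" and bG: "bounded G" using st by (auto simp: standing_def)
  have HU: "Uad x \<subseteq> {v \<in> Uset G. \<forall>z\<in>frontier G. v 0 z = x z}" using conjunct1[OF conjunct2[OF H1_U[OF h1 x]]] .
  have uU: "u \<in> Uset G" and u0: "\<And>z. z \<in> frontier G \<Longrightarrow> u 0 z = x z" using HU u by auto
  define m where "m = unorm G u"
  have m0: "0 \<le> m" unfolding m_def by (rule unorm_nonneg[OF uU])
  have cm: "c > m" using c by (simp add: m_def)
  have ubd: "\<bar>u t z\<bar> \<le> m" if "t \<ge> 0" "z \<in> frontier G" for t z
    unfolding m_def by (rule unorm_ge[OF uU that])
  have xc: "continuous_on (closure G) x" and xz: "\<And>z. z \<notin> closure G \<Longrightarrow> x z = 0"
    using H1_X[OF h1 x] by auto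
  have "uniformly_continuous_on (closure G) x"
    using compact_uniformly_continuous[OF xc] bG by (simp add: compact_closure)
  then have "\<exists>\<delta>>0. \<forall>z\<in>closure G. \<forall>z'\<in>closure G. dist z' z < \<delta> \<longrightarrow> dist (x z') (x z) < c - m"
    using cm unfolding uniformly_continuous_on_def by simp
  then obtain \<delta> where \<delta>: "\<delta> > 0" "\<And>z z'. z \<in> closure G \<Longrightarrow> z' \<in> closure G \<Longrightarrow> dist z' z < \<delta> \<Longrightarrow> dist (x z') (x z) < c - m"
    by blast
  have near: "\<bar>x z\<bar> < c" if z: "z \<in> G" and kz: "\<forall>z\<in>G. \<delta> \<le> infdist z (frontier G) \<longrightarrow> \<kappa> z = 0"
    and k0: "\<kappa> z \<noteq> 0" for z \<kappa>
  proof -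
    have lt: "infdist z (frontier G) < \<delta>"
    proof (rule ccontr)
      assume "\<not> infdist z (frontier G) < \<delta>"
      then have "\<delta> \<le> infdist z (frontier G)" by simp
      then have "\<kappa> z = 0" using kz z by blast
      then show False using k0 by simp
    qed
    have "G \<noteq> {}" using z by blast
    moreover have "G \<noteq> UNIV" using bG by auto
    ultimately have Fne: "frontier G \<noteq> {}" by (simp add: frontier_eq_empty)
    have "\<exists>s\<in>frontier G. dist z s < \<delta>"
    proof (rule ccontr)
      assume "\<not> (\<exists>s\<in>frontier G. dist z s < \<delta>)"
      then have "\<forall>s\<in>frontier G. \<delta> \<le> dist z s" by auto
      then have "\<delta> \<le> infdist z (frontier G)"
        unfolding infdist_notempty[OF Fne] by (intro cINF_greatest Fne) auto
      then show False using lt by simp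
    qed
    then obtain s where s: "s \<in> frontier G" "dist z s < \<delta>" by blast
    have "dist (x z) (x s) < c - m"
      using \<delta>(2)[OF frontier_closure[OF s(1)] _ s(2)] z closure_subset by blast
    moreover have "\<bar>x s\<bar> \<le> m" using ubd[OF order.refl s(1)] u0[OF s(1)] by simp
    ultimately show ?thesis by (simp add: dist_real_def)
  qed
  have H3i: "\<exists>k. continuous_on (closure G) k \<and> (\<forall>z\<in>closure G. 0 \<le> k z \<and> k z \<le> 1) \<and>
     (\<forall>z\<in>frontier G. k z = 1) \<and>
     (\<forall>z\<in>G. infdist z (frontier G) \<ge> \<delta> \<longrightarrow> k z = 0) \<and>
     restr G (\<lambda>z. (1 - k z) * x z + cc * k z) \<in> X" for cc
    using h3[unfolded H3_def, THEN spec[of _ \<delta>], THEN mp, OF \<delta>(1), THEN spec[of _ cc], THEN bspec, OF x] .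
  obtain k1 where k1: "\<forall>z\<in>closure G. 0 \<le> k1 z \<and> k1 z \<le> 1" "\<forall>z\<in>frontier G. k1 z = 1"
     "\<forall>z\<in>G. infdist z (frontier G) \<ge> \<delta> \<longrightarrow> k1 z = 0" "restr G (\<lambda>z. (1 - k1 z) * x z + c * k1 z) \<in> X"
    using H3i[of c] by blast
  obtain k2 where k2: "\<forall>z\<in>closure G. 0 \<le> k2 z \<and> k2 z \<le> 1" "\<forall>z\<in>frontier G. k2 z = 1"
     "\<forall>z\<in>G. infdist z (frontier G) \<ge> \<delta> \<longrightarrow> k2 z = 0" "restr G (\<lambda>z. (1 - k2 z) * x z + (-c) * k2 z) \<in> X"
    using H3i[of "-c"] by blast
  define xp where "xp = restr G (\<lambda>z. (1 - k1 z) * x z + c * k1 z)"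
  define xm where "xm = restr G (\<lambda>z. (1 - k2 z) * x z + (-c) * k2 z)"
  have xpX: "xp \<in> X" and xmX: "xm \<in> X" using k1(4) k2(4) by (simp_all add: xp_def xm_def)
  have xp_ge: "x z \<le> xp z" if z: "z \<in> G" for z
  proof -
    have zc: "z \<in> closure G" using z closure_subset by blast
    have "xp z = x z + k1 z * (c - x z)" using zc by (simp add: xp_def restr_def algebra_simps)
    moreover have "0 \<le> k1 z * (c - x z)"
    proof (cases "k1 z = 0")
      case False
      then have "\<bar>x z\<bar> < c" using near[OF z k1(3)] by blast
      then show ?thesis using k1(1) zc by auto
    qed simp
    ultimately show ?thesis by simp
  qed
  have xm_le: "xm z \<le> x z" if z: "z \<in> G" for z
  proof -
    have zc: "z \<in> closure G" using z closure_subset by blast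
    have "xm z = x z - k2 z * (c + x z)" using zc by (simp add: xm_def restr_def algebra_simps)
    moreover have "0 \<le> k2 z * (c + x z)"
    proof (cases "k2 z = 0")
      case False
      then have "\<bar>x z\<bar> < c" using near[OF z k2(3)] by blast
      then show ?thesis using k2(1) zc by auto
    qed simp
    ultimately show ?thesis by simp
  qed
  have xp_fr: "xp z = c" if "z \<in> frontier G" for z
    using that k1(2) frontier_closure[OF that] by (simp add: xp_def restr_def)
  have xm_fr: "xm z = - c" if "z \<in> frontier G" for z
    using that k2(2) frontier_closure[OF that] by (simp add: xm_def restr_def)
  have upU: "(\<lambda>s z. c) \<in> Uad xp"
  proof -
    have A: "\<And>v. v \<in> Uset G \<Longrightarrow> (\<forall>t\<ge>0. \<forall>z\<in>frontier G. v t z = xp z) \<Longrightarrow> v \<in> Uad xp"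
      using conjunct1[OF conjunct2[OF conjunct2[OF H1_U[OF h1 xpX]]]] by blast
    show ?thesis by (rule A[OF const_Uset]) (simp add: xp_fr)
  qed
  have umU: "(\<lambda>s z. - c) \<in> Uad xm"
  proof -
    have A: "\<And>v. v \<in> Uset G \<Longrightarrow> (\<forall>t\<ge>0. \<forall>z\<in>frontier G. v t z = xm z) \<Longrightarrow> v \<in> Uad xm"
      using conjunct1[OF conjunct2[OF conjunct2[OF H1_U[OF h1 xmX]]]] by blast
    show ?thesis by (rule A[OF const_Uset]) (simp add: xm_fr)
  qed
  obtain X1 where X1: "is_sol G a f x u X1" "\<And>t. t \<ge> 0 \<Longrightarrow> phi G a f t x u = restr G (X1 t)"
    using phi_ex[OF h1 su x u] by blast
  obtain Xp where Xp: "is_sol G a f xp (\<lambda>s z. c) Xp" "\<And>t. t \<ge> 0 \<Longrightarrow> phi G a f t xp (\<lambda>s z. c) = restr G (Xp t)"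
    using phi_ex[OF h1 su xpX upU] by blast
  obtain Xm where Xm: "is_sol G a f xm (\<lambda>s z. - c) Xm" "\<And>t. t \<ge> 0 \<Longrightarrow> phi G a f t xm (\<lambda>s z. - c) = restr G (Xm t)"
    using phi_ex[OF h1 su xmX umU] by blast
  have cmp1: "X1 t z \<le> Xp t z" if "t \<ge> 0" "z \<in> closure G" for t z
  proof (rule comparison[OF st h2 X1(1) Xp(1) xp_ge _ that])
    fix t :: real and z assume "0 \<le> t" "z \<in> frontier G"
    then show "u t z \<le> c" using ubd[of t z] cm by simp
  qed
  have cmp2: "Xm t z \<le> X1 t z" if "t \<ge> 0" "z \<in> closure G" for t z
  proof (rule comparison[OF st h2 Xm(1) X1(1) xm_le _ that])
    fix t :: real and z assume "0 \<le> t" "z \<in> frontier G"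
    then show "- c \<le> u t z" using ubd[of t z] cm by simp
  qed
  define y1 where "y1 = restr G (\<lambda>z. xp z - c)"
  define y2 where "y2 = restr G (\<lambda>z. xm z + c)"
  have xpz: "xp z = 0" if "z \<notin> closure G" for z using that by (simp add: xp_def restr_def)
  have xmz: "xm z = 0" if "z \<notin> closure G" for z using that by (simp add: xm_def restr_def)
  have y1X: "y1 \<in> X"
  proof -
    have eqy: "y1 = (\<lambda>z. xp z + (-1) * restr G (\<lambda>_. c) z)"
      by (rule ext) (simp add: y1_def restr_def xpz)
    show ?thesis unfolding eqy by (rule H1_add[OF h1 xpX H1_smul[OF h1 H1_const[OF h1]]])
  qed
  have y2X: "y2 \<in> X"
  proof -
    have eqy: "y2 = (\<lambda>z. xm z + 1 * restr G (\<lambda>_. c) z)"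
      by (rule ext) (simp add: y2_def restr_def xmz)
    show ?thesis unfolding eqy by (rule H1_add[OF h1 xmX H1_smul[OF h1 H1_const[OF h1]]])
  qed
  have y1Y: "y1 \<in> Yset G X" using y1X xp_fr frontier_closure by (simp add: Yset_def y1_def restr_def)
  have y2Y: "y2 \<in> Yset G X" using y2X xm_fr frontier_closure by (simp add: Yset_def y2_def restr_def)
  have y1b: "\<bar>y1 z\<bar> \<le> \<bar>x z\<bar> + \<bar>c\<bar>" if z: "z \<in> G" for z
  proof -
    have zc: "z \<in> closure G" using z closure_subset by blast
    have "y1 z = (1 - k1 z) * (x z - c)" using zc by (simp add: y1_def xp_def restr_def algebra_simps)
    moreover have "\<bar>(1 - k1 z) * (x z - c)\<bar> \<le> \<bar>x z - c\<bar>"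
    proof -
      have kb: "0 \<le> k1 z" "k1 z \<le> 1" using k1(1) zc by auto
      have "\<bar>(1 - k1 z) * (x z - c)\<bar> = (1 - k1 z) * \<bar>x z - c\<bar>" using kb by (simp add: abs_mult)
      also have "\<dots> \<le> 1 * \<bar>x z - c\<bar>" using kb by (intro mult_right_mono) auto
      finally show ?thesis by simp
    qed
    ultimately show ?thesis by simp
  qed
  have y2b: "\<bar>y2 z\<bar> \<le> \<bar>x z\<bar> + \<bar>c\<bar>" if z: "z \<in> G" for z
  proof -
    have zc: "z \<in> closure G" using z closure_subset by blast
    have "y2 z = (1 - k2 z) * (x z + c)" using zc by (simp add: y2_def xm_def restr_def algebra_simps)
    moreover have "\<bar>(1 - k2 z) * (x z + c)\<bar> \<le> \<bar>x z + c\<bar>"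
    proof -
      have kb: "0 \<le> k2 z" "k2 z \<le> 1" using k2(1) zc by auto
      have "\<bar>(1 - k2 z) * (x z + c)\<bar> = (1 - k2 z) * \<bar>x z + c\<bar>" using kb by (simp add: abs_mult)
      also have "\<dots> \<le> 1 * \<bar>x z + c\<bar>" using kb by (intro mult_right_mono) auto
      finally show ?thesis by simp
    qed
    ultimately show ?thesis by simp
  qed
  have r1: "restr G (\<lambda>z'. y1 z' + c) = xp"
    by (rule ext) (simp add: y1_def restr_def xpz)
  have r2: "restr G (\<lambda>z'. y2 z' + - c) = xm"
    by (rule ext) (simp add: y2_def restr_def xmz)
  have main: "\<bar>phi G a f t x u z\<bar> \<le> \<bar>phiY G a f t y1 c z\<bar> + \<bar>phiY G a f t y2 (-c) z\<bar> + \<bar>c\<bar>"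
    if t: "t \<ge> 0" and z: "z \<in> G" for t z
  proof -
    have zc: "z \<in> closure G" using z closure_subset by blast
    have e1: "phi G a f t x u z = X1 t z" using X1(2)[OF t] zc by (simp add: restr_def)
    have e2: "phiY G a f t y1 c z = Xp t z - c"
      unfolding phiY_def r1 using Xp(2)[OF t] zc by (simp add: restr_def)
    have e3: "phiY G a f t y2 (-c) z = Xm t z + c"
      unfolding phiY_def r2 using Xm(2)[OF t] zc by (simp add: restr_def)
    show ?thesis unfolding e1 e2 e3 using cmp1[OF t zc] cmp2[OF t zc] by linarith
  qed
  show ?thesis using that[OF y1Y y2Y y1b y2b main] .
qed



theorem mainTheorem5:
  fixes G :: "(real ^ 'n::finite) set"
    and a :: "'n \<Rightarrow> 'n \<Rightarrow> real ^ 'n \<Rightarrow> real"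
    and f :: "real ^ 'n \<Rightarrow> real \<Rightarrow> real ^ 'n \<Rightarrow> real"
    and X :: "(real ^ 'n \<Rightarrow> real) set"
    and Uad :: "(real ^ 'n \<Rightarrow> real) \<Rightarrow> (real \<Rightarrow> real ^ 'n \<Rightarrow> real) set"
    and p :: ereal
  assumes "standing G a f"
    and "H1 G a f X Uad"
    and "H2 G f"
    and "H3 G X"
    and "sol_unique G a f X Uad"
    and "1 \<le> p"
  shows "(ISS_P G a f X Uad p \<longleftrightarrow> ISS_P_const G a f X Uad p) \<and>
         (ISS_P_const G a f X Uad p \<longleftrightarrow> ISS_Q G a f X p)"
proof -
  note st = assms(1) and h1 = assms(2) and h2 = assms(3) and h3 = assms(4) and su = assms(5) and p1 = assms(6)
  have oG: "open G" and bG: "bounded G" using st by (auto simp: standing_def)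
  define C where "C = CG G"
  have C1: "C \<ge> 1" unfolding C_def by (rule CG_ge1)
  have Cpos: "C > 0" using C1 by simp
  have lpc: "lpnorm G p (\<lambda>z. k) \<le> C * \<bar>k\<bar>" for k
    unfolding C_def by (rule lp_const[OF oG bG p1])
  have lpc0: "lpnorm G p (\<lambda>z. 0) \<le> 0" using lpc[of 0] by simp
  have lpcn: "0 \<le> lpnorm G p (\<lambda>z. k)" for k by (rule lp_nonneg[OF good_const])
  have newfuns: "class_KL (\<lambda>r t. 18 * \<beta> (18 * r) t) \<and> class_K (\<lambda>s. 18 * \<beta> (18 * C * s) 0 + 18 * \<gamma> s + 18 * C * s)"
    if b: "class_KL \<beta>" and g: "class_K \<gamma>" for \<beta> \<gamma>
    using newKL[OF b, of 18 18] newK[OF b g, of 18 "18 * C" 18 "18 * C"] Cpos by simp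
  have PtoC: "ISS_P_const G a f X Uad p" if "ISS_P G a f X Uad p"
    using that unfolding ISS_P_def ISS_P_const_def by blast
  have CtoQ: "ISS_Q G a f X p" if hyp: "ISS_P_const G a f X Uad p"
  proof -
    obtain \<beta> \<gamma> where b: "class_KL \<beta>" and g: "class_K \<gamma>" and est:
      "\<And>t x u. t \<ge> 0 \<Longrightarrow> x \<in> X \<Longrightarrow> u \<in> Uad x \<inter> Uc G \<Longrightarrow>
        lpnorm G p (phi G a f t x u) \<le> \<beta> (lpnorm G p x) t + \<gamma> (unorm G u)"
      using hyp unfolding ISS_P_const_def by blast
    show ?thesis unfolding ISS_Q_def
    proof (intro exI conjI allI impI ballI)
      show "class_KL (\<lambda>r t. 18 * \<beta> (18 * r) t)" using newfuns[OF b g] by blast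
      show "class_K (\<lambda>s. 18 * \<beta> (18 * C * s) 0 + 18 * \<gamma> s + 18 * C * s)" using newfuns[OF b g] by blast
      fix t :: real and y k assume t: "0 \<le> t" and y: "y \<in> Yset G X"
      define x where "x = restr G (\<lambda>z. y z + k)"
      define u where "u = (\<lambda>(s::real) (z::real^'n). k)"
      have xX: "x \<in> X" and uA: "u \<in> Uad x" and uC: "u \<in> Uc G" and xc: "continuous_on (closure G) x"
        using Q_setup[OF h1 y, of k] by (simp_all add: x_def u_def)
      have yX: "y \<in> X" using y by (simp add: Yset_def)
      have e1: "lpnorm G p (phi G a f t x u) \<le> \<beta> (lpnorm G p x) t + \<gamma> (unorm G u)"
        using est[OF t xX] uA uC by blast
      have uU: "u \<in> Uset G" unfolding u_def by (rule const_Uset)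
      have "\<gamma> (unorm G u) \<le> \<gamma> \<bar>k\<bar>"
        using K_mono[OF g unorm_nonneg[OF uU]] unorm_const[of G k] by (simp add: u_def)
      then have e2: "lpnorm G p (phi G a f t x u) \<le> \<beta> (lpnorm G p x) t + \<gamma> \<bar>k\<bar>" using e1 by simp
      have gphi: "good G (phi G a f t x u)" by (rule phi_good(2)[OF h1 su bG xX uA t])
      have gx: "good G x" by (rule cont_closure_good[OF bG xc])
      have gy: "good G y" by (rule good_X[OF h1 bG yX])
      have gY: "good G (phiY G a f t y k)" by (rule phiY_good[OF h1 su bG y t])
      have phiYeq: "phiY G a f t y k = restr G (\<lambda>z. phi G a f t x u z - k)"
        by (simp add: phiY_def x_def u_def)
      have "lpnorm G p (phiY G a f t y k) \<le> 9 * (lpnorm G p (phi G a f t x u) + lpnorm G p (\<lambda>z. k) + lpnorm G p (\<lambda>z. 0))"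
      proof (rule lp_three[OF oG bG p1 gY gphi good_const good_const])
        fix z assume z: "z \<in> G"
        then have "z \<in> closure G" using closure_subset by blast
        then show "\<bar>phiY G a f t y k z\<bar> \<le> \<bar>phi G a f t x u z\<bar> + \<bar>k\<bar> + \<bar>0\<bar>"
          unfolding phiYeq by (simp add: restr_def)
      qed
      then have L1: "lpnorm G p (phiY G a f t y k) \<le> 9 * lpnorm G p (phi G a f t x u) + 9 * C * \<bar>k\<bar>"
        using lpc[of k] lpc0 by simp
      have "lpnorm G p x \<le> 9 * (lpnorm G p y + lpnorm G p (\<lambda>z. k) + lpnorm G p (\<lambda>z. 0))"
      proof (rule lp_three[OF oG bG p1 gx gy good_const good_const])
        fix z assume z: "z \<in> G"
        then have "z \<in> closure G" using closure_subset by blast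
        then show "\<bar>x z\<bar> \<le> \<bar>y z\<bar> + \<bar>k\<bar> + \<bar>0\<bar>" by (simp add: x_def restr_def)
      qed
      then have L2: "lpnorm G p x \<le> 9 * lpnorm G p y + 9 * (C * \<bar>k\<bar>)"
        using lpc[of k] lpc0 by simp
      have ny: "0 \<le> lpnorm G p y" by (rule lp_nonneg[OF gy])
      have nx: "0 \<le> lpnorm G p x" by (rule lp_nonneg[OF gx])
      have "\<beta> (lpnorm G p x) t \<le> \<beta> (9 * lpnorm G p y + 9 * (C * \<bar>k\<bar>)) t"
        using KL_mono[OF b t nx L2] .
      also have "\<dots> \<le> \<beta> (2 * (9 * lpnorm G p y)) t + \<beta> (2 * (9 * (C * \<bar>k\<bar>))) 0"
        by (rule KL_sum[OF b _ _ t]) (use ny Cpos in auto)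
      finally have L3: "\<beta> (lpnorm G p x) t \<le> \<beta> (18 * lpnorm G p y) t + \<beta> (18 * C * \<bar>k\<bar>) 0"
        by (simp add: mult.assoc)
      have n1: "0 \<le> \<beta> (18 * lpnorm G p y) t" using KL_nonneg[OF b _ t] ny by simp
      have n2: "0 \<le> \<beta> (18 * C * \<bar>k\<bar>) 0" using KL_nonneg[OF b] Cpos by simp
      have n3: "0 \<le> \<gamma> \<bar>k\<bar>" using K_nonneg[OF g] by simp
      have n4: "0 \<le> C * \<bar>k\<bar>" using Cpos by simp
      show "lpnorm G p (phiY G a f t y k) \<le> 18 * \<beta> (18 * lpnorm G p y) t +
              (18 * \<beta> (18 * C * \<bar>k\<bar>) 0 + 18 * \<gamma> \<bar>k\<bar> + 18 * C * \<bar>k\<bar>)"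
        using L1 e2 L3 n1 n2 n3 n4 by linarith
    qed
  qed
  have QtoP: "ISS_P G a f X Uad p" if hyp: "ISS_Q G a f X p"
  proof -
    obtain \<beta> \<gamma> where b: "class_KL \<beta>" and g: "class_K \<gamma>" and est:
      "\<And>t y k. t \<ge> 0 \<Longrightarrow> y \<in> Yset G X \<Longrightarrow>
        lpnorm G p (phiY G a f t y k) \<le> \<beta> (lpnorm G p y) t + \<gamma> \<bar>k\<bar>"
      using hyp unfolding ISS_Q_def by blast
    have nf: "class_KL (\<lambda>r t. 18 * \<beta> (18 * r) t)" "class_K (\<lambda>s. 18 * \<beta> (18 * C * s) 0 + 18 * \<gamma> s + 18 * C * s)"
      using newfuns[OF b g] by blast+
    show ?thesis unfolding ISS_P_def
    proof (intro exI conjI allI impI ballI nf)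
      fix t :: real and x u assume t: "0 \<le> t" and x: "x \<in> X" and u: "u \<in> Uad x"
      have uU: "u \<in> Uset G" using H1_U[OF h1 x] u by blast
      have m0: "0 \<le> unorm G u" by (rule unorm_nonneg[OF uU])
      have gx: "good G x" by (rule good_X[OF h1 bG x])
      have nx: "0 \<le> lpnorm G p x" by (rule lp_nonneg[OF gx])
      have gphi: "good G (phi G a f t x u)" by (rule phi_good(2)[OF h1 su bG x u t])
      show "lpnorm G p (phi G a f t x u) \<le> 18 * \<beta> (18 * lpnorm G p x) t +
          (\<lambda>s. 18 * \<beta> (18 * C * s) 0 + 18 * \<gamma> s + 18 * C * s) (unorm G u)"
      proof (rule K_right_limit[OF nf(2) m0])
        fix c assume c: "c > unorm G u"
        then have cpos: "c > 0" using m0 by simp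
        obtain y1 y2 where y: "y1 \<in> Yset G X" "y2 \<in> Yset G X"
          "\<And>z. z \<in> G \<Longrightarrow> \<bar>y1 z\<bar> \<le> \<bar>x z\<bar> + \<bar>c\<bar>" "\<And>z. z \<in> G \<Longrightarrow> \<bar>y2 z\<bar> \<le> \<bar>x z\<bar> + \<bar>c\<bar>"
          "\<And>t z. t \<ge> 0 \<Longrightarrow> z \<in> G \<Longrightarrow>
            \<bar>phi G a f t x u z\<bar> \<le> \<bar>phiY G a f t y1 c z\<bar> + \<bar>phiY G a f t y2 (-c) z\<bar> + \<bar>c\<bar>"
          using sandwich[OF st h1 h2 h3 su x u c] by blast
        have gY1: "good G (phiY G a f t y1 c)" by (rule phiY_good[OF h1 su bG y(1) t])
        have gY2: "good G (phiY G a f t y2 (-c))" by (rule phiY_good[OF h1 su bG y(2) t])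
        have "lpnorm G p (phi G a f t x u) \<le> 9 * (lpnorm G p (phiY G a f t y1 c) + lpnorm G p (phiY G a f t y2 (-c)) + lpnorm G p (\<lambda>z. c))"
          by (rule lp_three[OF oG bG p1 gphi gY1 gY2 good_const]) (use y(5)[OF t] in simp)
        moreover have "lpnorm G p (\<lambda>z. c) \<le> C * c" using lpc[of c] cpos by simp
        moreover have E1: "lpnorm G p (phiY G a f t y1 c) \<le> \<beta> (lpnorm G p y1) t + \<gamma> c"
          using est[OF t y(1), of c] cpos by simp
        moreover have E2: "lpnorm G p (phiY G a f t y2 (-c)) \<le> \<beta> (lpnorm G p y2) t + \<gamma> c"
          using est[OF t y(2), of "-c"] cpos by simp
        moreover have Y: "\<beta> (lpnorm G p yy) t \<le> \<beta> (18 * lpnorm G p x) t + \<beta> (18 * C * c) 0"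
          if yy: "yy \<in> Yset G X" "\<And>z. z \<in> G \<Longrightarrow> \<bar>yy z\<bar> \<le> \<bar>x z\<bar> + \<bar>c\<bar>" for yy
        proof -
          have yyX: "yy \<in> X" using yy(1) by (simp add: Yset_def)
          have gy: "good G yy" by (rule good_X[OF h1 bG yyX])
          have ny: "0 \<le> lpnorm G p yy" by (rule lp_nonneg[OF gy])
          have "lpnorm G p yy \<le> 9 * (lpnorm G p x + lpnorm G p (\<lambda>z. c) + lpnorm G p (\<lambda>z. 0))"
            by (rule lp_three[OF oG bG p1 gy gx good_const good_const]) (use yy(2) in simp)
          then have L2: "lpnorm G p yy \<le> 9 * lpnorm G p x + 9 * (C * c)"
            using lpc[of c] lpc0 cpos by simp
          have "\<beta> (lpnorm G p yy) t \<le> \<beta> (9 * lpnorm G p x + 9 * (C * c)) t"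
            using KL_mono[OF b t ny L2] .
          also have "\<dots> \<le> \<beta> (2 * (9 * lpnorm G p x)) t + \<beta> (2 * (9 * (C * c))) 0"
            by (rule KL_sum[OF b _ _ t]) (use nx Cpos cpos in auto)
          finally show ?thesis by (simp add: mult.assoc)
        qed
        moreover have "0 \<le> \<beta> (18 * lpnorm G p x) t" using KL_nonneg[OF b _ t] nx by simp
        moreover have "0 \<le> \<beta> (18 * C * c) 0" using KL_nonneg[OF b] Cpos cpos by simp
        moreover have "0 \<le> \<gamma> c" using K_nonneg[OF g] cpos by simp
        moreover have "0 \<le> C * c" using Cpos cpos by simp
        ultimately show "lpnorm G p (phi G a f t x u) \<le> 18 * \<beta> (18 * lpnorm G p x) t +
          (\<lambda>s. 18 * \<beta> (18 * C * s) 0 + 18 * \<gamma> s + 18 * C * s) c"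
          using Y[OF y(1) y(3)] Y[OF y(2) y(4)] by simp
      qed
    qed (simp_all add: nf)
  qed
  show ?thesis using PtoC CtoQ QtoP by blast
qed


end
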